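(* Let $q$ be an odd prime power and $\varepsilon=(-1)^{(q-1)/2}$ (so $q\equiv\varepsilon\pmod 4$ and $\varepsilon=\left(\frac{-1}{q}\right)$). For every $k\ge 1$ we have $D_k(2)=2$, $D_k(-2)=(-1)^k\cdot 2$, and, viewing $D_k$ as a map ${\mathbb F}_q\to{\mathbb F}_q$: (i) $D_k(\mathcal A_2^{++})\subset \mathcal A_2^{++}\sqcup\{2,-2\varepsilon\}$ and $D_k(\mathcal A_2^{-+})\subset \mathcal A_2^{-+}\sqcup\{2,2\varepsilon\}$. (ii) If $k$ is odd then $D_k(\mathcal A_2^{\varepsilon,-})\subset \mathcal A_2^{\varepsilon,-}\sqcup\{-2\}$ and $D_k(\mathcal A_2^{-\varepsilon,-})\subset\mathcal A_2^{-\varepsilon,-}$. (iii) If $k$ is even then $D_k(\mathcal A_2^{--})\subset \mathcal A_2^{++}\sqcup\{2,-2\varepsilon\}$ and $D_k(\mathcal A_2^{+-})\subset\mathcal A_2^{-+}\sqcup\{2,2\varepsilon\}$. (iv) If $(q-1)/2$ divides $k$, then $D_k({\mathbb F}_q)\subset \mathcal A_2^{+-}\sqcup\mathcal A_2^{-+}\sqcup\{2,-2\}$; if in addition $k$ is even then $D_k({\mathbb F}_q)\subset\mathcal A_2^{-+}\sqcup\{2,-2\}$. (v) If $(q+1)/2$ divides $k$, then $D_k({\mathbb F}_q)\subset \mathcal A_2^{++}\sqcup\mathcal A_2^{--}\sqcup\{2,-2\}$; if in addition $k$ is even then $D_k({\mathbb F}_q)\subset\mathcal A_2^{++}\sqcup\{2,-2\}$.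 (vi) If $\mathcal A_2^{\varepsilon_1,\varepsilon_2}$ is nonempty, then $D_k$ permutes $\mathcal A_2^{\varepsilon_1,\varepsilon_2}$ if and only if $\gcd(k,d^{\varepsilon_1,\varepsilon_2})=1$, where $d^{++}=(q-1)/2$, $d^{+-}=q+1$, $d^{-+}=(q+1)/2$, $d^{--}=q-1$.
   Context: The Dickson polynomials of the first kind $D_k(x)\in\mathbb Z[x]$ are defined by $D_0=2$, $D_1=x$, $D_{k+2}=xD_{k+1}-D_k$; equivalently $D_k(u+1/u)=u^k+u^{-k}$ for an indeterminate $u$. They are regarded as functions on ${\mathbb F}_q$ by reducing coefficients. For $q$ odd and $a\in{\mathbb F}_q$, $\left(\frac{a}{q}\right)$ is $1$ if $a$ is a nonzero square, $-1$ if $a$ is a nonsquare, $0$ if $a=0$. For $\varepsilon_1,\varepsilon_2\in\{1,-1\}$ (written $+,-$) and $\lambda\in{\mathbb F}_q^\times$, $\mathcal A_\lambda^{\varepsilon_1,\varepsilon_2}=\{u\in{\mathbb F}_q: \left(\frac{u-\lambda}{q}\right)=\varepsilon_1,\ \left(\frac{u+\lambda}{q}\right)=\varepsilon_2\}$. *)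

theory Defs
  imports Main
begin

fun dickson :: "nat \<Rightarrow> 'a::comm_ring_1 \<Rightarrow> 'a" where
  "dickson 0 x = 2"
| "dickson (Suc 0) x = x"
| "dickson (Suc (Suc k)) x = x * dickson (Suc k) x - dickson k x"

definition qchar :: "'a::field \<Rightarrow> int" where
  "qchar a = (if a = 0 then 0 else if (\<exists>y. y ^ 2 = a) then 1 else -1)"

definition Aset :: "'a::field \<Rightarrow> int \<Rightarrow> int \<Rightarrow> 'a set" where
  "Aset lam e1 e2 = {u. qchar (u - lam) = e1 \<and> qchar (u + lam) = e2}"

definition dval :: "nat \<Rightarrow> int \<Rightarrow> int \<Rightarrow> nat" where
  "dval q e1 e2 =
     (if e1 = 1 \<and> e2 = 1 then (q - 1) div 2
      else if e1 = 1 \<and> e2 = -1 then q + 1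
      else if e1 = -1 \<and> e2 = 1 then (q + 1) div 2
      else q - 1)"

end

theory Submission
  imports Defs "HOL-Computational_Algebra.Polynomial"
begin


lemma dickson_uv:
  fixes u v :: "'a::comm_ring_1"
  assumes "u * v = 1"
  shows "dickson k (u + v) = u ^ k + v ^ k"
proof (induction k rule: less_induct)
  case (less k)
  show ?case
  proof (cases k)
    case 0 then show ?thesis by simp
  next
    case (Suc j)
    show ?thesis
    proof (cases j)
      case 0 then show ?thesis using Suc by simp
    next
      case (Suc i)
      have "dickson k (u + v) = (u+v) * (u^Suc i + v^Suc i) - (u^i + v^i)"
        using less Suc \<open>k = Suc j\<close> by simp
      also have "\<dots> = u^Suc (Suc i) + v^Suc (Suc i) + (u*v) * (u^i+v^i) - (u^i+v^i)"
        by (simp add: algebra_simps)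
      finally show ?thesis using assms Suc \<open>k = Suc j\<close> by simp
    qed
  qed
qed

lemma roots_bound:
  fixes c :: "'b::idom"
  assumes "n \<ge> 1"
  shows "card {y. y ^ n = c} \<le> n"
proof -
  let ?p = "monom 1 n + [:-c:]"
  have deg: "degree ?p = n" using assms
    by (subst degree_add_eq_left) (simp_all add: degree_monom_eq)
  have "?p \<noteq> 0" using deg assms by auto
  moreover have "{y. poly ?p y = 0} = {y. y ^ n = c}"
    by (auto simp: poly_monom)
  ultimately show ?thesis using card_poly_roots_bound[of ?p] deg by simp
qed

lemma roots_finite:
  fixes c :: "'b::idom"
  assumes "n \<ge> 1"
  shows "finite {y. y ^ n = c}"
proof -
  let ?p = "monom 1 n + [:-c:]"
  have deg: "degree ?p = n" using assms
    by (subst degree_add_eq_left) (simp_all add: degree_monom_eq)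
  have "?p \<noteq> 0" using deg assms by auto
  moreover have "{y. poly ?p y = 0} = {y. y ^ n = c}"
    by (auto simp: poly_monom)
  ultimately show ?thesis using poly_roots_finite[of ?p] by simp
qed

lemma fermat_ff:
  fixes x :: "'b::{field,finite}"
  assumes "x \<noteq> 0"
  shows "x ^ (card (UNIV::'b set) - 1) = 1"
proof -
  let ?U = "UNIV - {0::'b}"
  have bij: "bij_betw ((*) x) ?U ?U"
  proof -
    have "inj_on ((*) x) ?U" unfolding inj_on_def using assms by auto
    moreover have "(*) x ` ?U = ?U"
    proof
      show "(*) x ` ?U \<subseteq> ?U" using assms by auto
      show "?U \<subseteq> (*) x ` ?U"
      proof
        fix y assume "y \<in> ?U"
        hence "y / x \<in> ?U" "y = x * (y / x)" using assms by auto
        thus "y \<in> (*) x ` ?U" by blast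
      qed
    qed
    ultimately show ?thesis by (simp add: bij_betw_def)
  qed
  have "(\<Prod>y\<in>?U. x * y) = (\<Prod>y\<in>?U. y)"
    using prod.reindex_bij_betw[OF bij, of "\<lambda>y. y"] by simp
  moreover have "(\<Prod>y\<in>?U. x * y) = x ^ card ?U * (\<Prod>y\<in>?U. y)"
    by (simp add: prod.distrib)
  moreover have "(\<Prod>y\<in>?U. y) \<noteq> 0" by simp
  moreover have "card ?U = card (UNIV::'b set) - 1"
    by (simp add: card_Diff_subset)
  ultimately show ?thesis by (metis mult_cancel_right1)
qed

lemma card_nat_field_zero:
  "(of_nat (card (UNIV::'b::{comm_ring_1,finite} set)) :: 'b) = 0"
proof -
  have bij: "bij_betw (\<lambda>y. y + 1) (UNIV::'b set) UNIV"
    unfolding bij_betw_def inj_on_def by (auto simp: image_iff intro!: exI[of _ "y - 1" for y])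
  have "(\<Sum>y\<in>UNIV. y + (1::'b)) = (\<Sum>y\<in>UNIV. y)"
    using sum.reindex_bij_betw[OF bij, of "\<lambda>y. y"] by simp
  moreover have "(\<Sum>y\<in>UNIV. y + (1::'b)) = (\<Sum>y\<in>UNIV. y) + of_nat (card (UNIV::'b set))"
    by (simp add: sum.distrib)
  ultimately show ?thesis by simp
qed

lemma two_ne_zero_ff:
  assumes "odd (card (UNIV::'b::{field,finite} set))"
  shows "(2::'b) \<noteq> 0"
proof
  assume h: "(2::'b) = 0"
  obtain m where m: "card (UNIV::'b set) = 2 * m + 1" using assms oddE by blast
  have "(of_nat (card (UNIV::'b set))::'b) = 2 * of_nat m + 1" by (simp add: m)
  also have "\<dots> = 1" using h by simp
  finally show False using card_nat_field_zero[where 'b='b] by simp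
qed

lemma fiber_count:
  assumes "finite A" "\<And>z. z \<in> f ` A \<Longrightarrow> card {y\<in>A. f y = z} \<le> m"
  shows "card A \<le> m * card (f ` A)"
proof -
  have eq: "A = (\<Union>z\<in>f ` A. {y\<in>A. f y = z})" by auto
  have "card A = card (\<Union>z\<in>f ` A. {y\<in>A. f y = z})" using eq by simp
  also have "\<dots> \<le> (\<Sum>z\<in>f ` A. card {y\<in>A. f y = z})"
    by (rule card_UN_le) (simp add: assms(1))
  also have "\<dots> \<le> (\<Sum>z\<in>f ` A. m)" by (intro sum_mono assms(2))
  finally show ?thesis by (simp add: mult.commute)
qed


lemma sq_image:
  fixes N :: nat
  assumes cardG: "card {y::'b::field. y^N = 1} = N" and ev: "even N" and pos: "N > 0"
  shows "(\<lambda>y. y^2) ` {y::'b. y^N = 1} = {y. y^(N div 2) = 1}"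
    and "card {y::'b. y^(N div 2) = 1} = N div 2"
proof -
  let ?G = "{y::'b. y^N = 1}" and ?Q = "{y::'b. y^(N div 2) = 1}"
  have fG: "finite ?G" by (rule card_ge_0_finite) (simp add: cardG pos)
  have N2: "N div 2 \<ge> 1" using ev pos by (auto elim!: evenE)
  have sub: "(\<lambda>y. y^2) ` ?G \<subseteq> ?Q"
  proof
    fix z assume "z \<in> (\<lambda>y. y^2) ` ?G"
    then obtain y where y: "y^N = 1" "z = y^2" by auto
    have "z^(N div 2) = y^(2 * (N div 2))" by (simp only: y(2) power_mult)
    also have "2 * (N div 2) = N" using ev by simp
    finally show "z \<in> ?Q" using y(1) by simp
  qed
  have fQ: "finite ?Q"
  proof -
    have "?Q \<subseteq> ?G"
    proof
      fix y assume "y \<in> ?Q"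
      hence "y^((N div 2) * 2) = 1" by (simp only: power_mult) simp
      thus "y \<in> ?G" using ev by simp
    qed
    thus ?thesis using fG finite_subset by blast
  qed
  have cQ: "card ?Q \<le> N div 2" using roots_bound[OF N2, where c="1::'b"] by simp
  have "card ?G \<le> 2 * card ((\<lambda>y. y^2) ` ?G)"
  proof (rule fiber_count[OF fG])
    fix z
    have "{y \<in> ?G. y^2 = z} \<subseteq> {y. y^2 = z}" by auto
    moreover have "card {y::'b. y^2 = z} \<le> 2" using roots_bound[of 2 z] by simp
    moreover have "finite {y \<in> ?G. y^2 = z}" using fG by auto
    moreover have "finite {y::'b. y^2 = z}" using roots_finite[of 2 z] by simp
    ultimately show "card {y \<in> ?G. y^2 = z} \<le> 2"
      by (meson card_mono le_trans)
  qed
  hence ge: "card ((\<lambda>y. y^2) ` ?G) \<ge> N div 2" using cardG by linarith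
  have "card ((\<lambda>y. y^2) ` ?G) \<le> card ?Q" using card_mono[OF fQ sub] .
  hence eqc: "card ((\<lambda>y. y^2) ` ?G) = card ?Q" using ge cQ by linarith
  show "(\<lambda>y. y^2) ` ?G = ?Q" using card_subset_eq[OF fQ sub eqc] .
  show "card ?Q = N div 2" using ge cQ eqc by linarith
qed

lemma exists_root_p:
  fixes N p :: nat
  assumes cardG: "card {y::'b::field. y^N = 1} = N" and pos: "N > 0"
    and p: "prime p" "p dvd N"
  shows "\<exists>z::'b. z^N = 1 \<and> z^p = 1 \<and> z \<noteq> 1"
proof -
  let ?G = "{y::'b. y^N = 1}"
  obtain M where M: "N = p * M" using p by (auto elim: dvdE)
  have M1: "M \<ge> 1" using M pos by (cases M) auto
  have p1: "p > 1" using p prime_gt_1_nat by blast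
  have "M < N" using M M1 p1 by (metis mult_less_cancel2 mult_1 less_le_trans zero_less_one)
  have fG: "finite ?G" by (rule card_ge_0_finite) (simp add: cardG pos)
  have "\<exists>y\<in>?G. y^M \<noteq> 1"
  proof (rule ccontr)
    assume "\<not> ?thesis"
    hence "?G \<subseteq> {y. y^M = 1}" by auto
    moreover have "{y::'b. y^M = 1} \<subseteq> ?G"
    proof
      fix y :: 'b assume "y \<in> {y. y^M = 1}"
      hence "y^(M * p) = 1" by (simp add: power_mult)
      thus "y \<in> ?G" by (simp add: M mult.commute)
    qed
    ultimately have "?G = {y. y^M = 1}" by blast
    hence "card ?G \<le> M" using roots_bound[OF M1] by simp
    thus False using cardG \<open>M < N\<close> by simp
  qed
  then obtain y :: 'b where y: "y^N = 1" "y^M \<noteq> 1" by auto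
  have "(y^M)^N = (y^N)^M" by (simp add: power_mult[symmetric] mult.commute)
  hence "(y^M)^N = 1" using y by simp
  moreover have "(y^M)^p = 1" using y M by (simp add: power_mult[symmetric] mult.commute)
  ultimately show ?thesis using y by blast
qed


lemma pow_nhalf_cases:
  fixes u :: "'b::field"
  assumes "u^n = 1" "even n"
  shows "u^(n div 2) = 1 \<or> u^(n div 2) = -1"
proof -
  have "(u^(n div 2))^2 = u^n" using assms(2)
    by (simp add: power_mult[symmetric] mult.commute)
  hence "(u^(n div 2))^2 = 1" using assms(1) by simp
  thus ?thesis by (simp add: power2_eq_1_iff)
qed

lemma power_perm:
  fixes n k :: nat and \<phi> :: "'b::field \<Rightarrow> 'a" and f :: "'a \<Rightarrow> 'a" and A :: "'a set" and b :: bool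
  defines "H \<equiv> {y::'b. y^n = 1}" and "Q \<equiv> {y::'b. y^(n div 2) = 1}"
  defines "S \<equiv> (if b then Q else H - Q)"
  defines "T \<equiv> S - {1, -1}"
  assumes cardH: "card H = n" and ev: "even n" and npos: "n > 0" and two: "(2::'b) \<noteq> 0"
    and k: "k \<ge> 1"
    and hA: "\<forall>u\<in>H. \<phi> u \<in> A \<longleftrightarrow> u \<in> T"
    and hsurj: "A \<subseteq> \<phi> ` T"
    and hinj: "\<forall>u\<in>T. \<forall>v\<in>T. \<phi> u = \<phi> v \<longrightarrow> v = u \<or> v = inverse u"
    and hinv: "\<forall>u\<in>H. \<phi> (inverse u) = \<phi> u"
    and hf: "\<forall>u\<in>H. f (\<phi> u) = \<phi> (u^k)"
    and ne: "A \<noteq> {}"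
  shows "bij_betw f A A \<longleftrightarrow> gcd k (if b then n div 2 else n) = 1"
proof -
  define d where "d = (if b then n div 2 else n)"
  have n2: "n div 2 \<ge> 1" using ev npos by (auto elim!: evenE)
  have fH: "finite H" by (rule card_ge_0_finite) (simp add: cardH npos)
  have Hnz: "u \<noteq> 0" if "u \<in> H" for u using that npos unfolding H_def by (auto simp: zero_power)
  have Hmul: "u * v \<in> H" if "u \<in> H" "v \<in> H" for u v
    using that unfolding H_def by (simp add: power_mult_distrib)
  have Hinv: "inverse u \<in> H" if "u \<in> H" for u
    using that unfolding H_def by (simp add: power_inverse)
  have Hpow: "u^j \<in> H" if "u \<in> H" for u j
  proof -
    have "(u^j)^n = (u^n)^j" by (simp add: power_mult[symmetric] mult.commute)
    thus ?thesis using that unfolding H_def by simp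
  qed
  have Qmul: "u * v \<in> Q" if "u \<in> Q" "v \<in> Q" for u v
    using that unfolding Q_def by (simp add: power_mult_distrib)
  have Qinv: "inverse u \<in> Q" if "u \<in> Q" for u
    using that unfolding Q_def by (simp add: power_inverse)
  have Qpow: "u^j \<in> Q" if "u \<in> Q" for u j
  proof -
    have "(u^j)^(n div 2) = (u^(n div 2))^j" by (simp add: power_mult[symmetric] mult.commute)
    thus ?thesis using that unfolding Q_def by simp
  qed
  have QH: "Q \<subseteq> H"
  proof
    fix y assume "y \<in> Q"
    hence "(y^(n div 2))^2 = 1" unfolding Q_def by simp
    hence "y^((n div 2) * 2) = 1" by (simp only: power_mult)
    thus "y \<in> H" using ev unfolding H_def by simp
  qed
  have cQ: "card Q = n div 2" using sq_image(2)[of n] cardH ev npos unfolding H_def Q_def by simp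
  have cases2: "u^(n div 2) = 1 \<or> u^(n div 2) = -1" if "u \<in> H" for u
    using pow_nhalf_cases[of u n] that ev unfolding H_def by simp
  have m1: "(-1::'b) \<noteq> 1"
  proof
    assume h: "(-1::'b) = 1"
    have "(2::'b) = 1 + 1" by simp
    also have "\<dots> = 1 + -1" using h by simp
    finally show False using two by simp
  qed
  have TS: "T \<subseteq> S" unfolding T_def by auto
  have SH: "S \<subseteq> H" unfolding S_def using QH by auto
  have TH: "T \<subseteq> H" using TS SH by auto
  have sq1: "u = 1 \<or> u = -1" if "u^2 = 1" for u :: 'b using that by (simp add: power2_eq_1_iff)
  have dpos: "d > 0" unfolding d_def using n2 npos by auto
  obtain u0 where u0: "u0 \<in> T" using ne hsurj by blast
  have Tinv: "inverse u \<in> T" if u: "u \<in> T" for u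
  proof -
    have uH: "u \<in> H" using u TH by auto
    have "inverse u \<in> S"
    proof (cases b)
      case True
      then show ?thesis using u Qinv unfolding T_def S_def by auto
    next
      case False
      hence "u^(n div 2) \<noteq> 1" using u unfolding T_def S_def Q_def by auto
      hence "(inverse u)^(n div 2) \<noteq> 1" by (simp add: power_inverse)
      thus ?thesis using False Hinv[OF uH] unfolding S_def Q_def by auto
    qed
    moreover have "inverse u \<noteq> 1"
      using u unfolding T_def by (metis DiffE insertCI inverse_1 inverse_inverse_eq)
    moreover have "inverse u \<noteq> -1"
      using u unfolding T_def by (metis DiffE insertCI inverse_1 inverse_inverse_eq inverse_minus_eq)
    ultimately show ?thesis unfolding T_def by auto
  qed
  have "bij_betw f A A \<longleftrightarrow> gcd k d = 1"
  proof
    assume bij: "bij_betw f A A"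
    have clos: "u^k \<in> T" if u: "u \<in> T" for u
    proof -
      have "\<phi> u \<in> A" using hA u TH by blast
      hence "f (\<phi> u) \<in> A" using bij bij_betwE by blast
      hence "\<phi> (u^k) \<in> A" using hf u TH by auto
      thus ?thesis using hA Hpow u TH by blast
    qed
    have injT: "u = v" if "u \<in> T" "v \<in> T" "u^k = v^k" for u v
    proof -
      have "\<phi> u \<in> A" "\<phi> v \<in> A" using hA that TH by blast+
      moreover have "f (\<phi> u) = f (\<phi> v)"
      proof -
        have "u \<in> H" "v \<in> H" using that TH by auto
        hence "f (\<phi> u) = \<phi> (u^k)" "f (\<phi> v) = \<phi> (v^k)" using hf by auto
        thus ?thesis using that(3) by simp
      qed
      ultimately have "\<phi> u = \<phi> v" using bij unfolding bij_betw_def inj_on_def by blast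
      hence "v = u \<or> v = inverse u" using hinj that by blast
      moreover have "v \<noteq> inverse u"
      proof
        assume "v = inverse u"
        hence e: "u^k = inverse (u^k)" using that(3) by (simp add: power_inverse)
        have "u^k \<noteq> 0" using Hnz[of "u^k"] Hpow[of u k] that TH by auto
        hence "(u^k)^2 = 1" using e
          by (metis power2_eq_square right_inverse)
        hence "u^k = 1 \<or> u^k = -1" using sq1 by blast
        thus False using clos[OF that(1)] unfolding T_def by auto
      qed
      ultimately show ?thesis by simp
    qed
    show "gcd k d = 1"
    proof (rule ccontr)
      assume g: "gcd k d \<noteq> 1"
      then obtain p where p: "prime p" "p dvd gcd k d" using prime_factor_nat by blast
      have pk: "p dvd k" and pd: "p dvd d" using p by auto
      have zk: "z^k = 1" if "z^p = 1" for z :: 'b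
      proof -
        obtain j where "k = p * j" using pk by (auto elim: dvdE)
        thus ?thesis using that by (simp add: power_mult)
      qed
      show False
      proof (cases b)
        case True
        hence dd: "d = n div 2" unfolding d_def by simp
        obtain z :: 'b where z: "z^(n div 2) = 1" "z^p = 1" "z \<noteq> 1"
          using exists_root_p[where 'b='b, of "n div 2" p] cQ n2 p pd dd unfolding Q_def by auto
        have zQ: "z \<in> Q" using z unfolding Q_def by simp
        show False
        proof (cases "z = -1")
          case False
          hence "z \<in> T" using zQ z True unfolding T_def S_def by auto
          hence "z^k \<in> T" by (rule clos)
          thus False using zk[OF z(2)] unfolding T_def by auto
        next
          case zm: True
          have u0Q: "u0 \<in> Q" using u0 True unfolding T_def S_def by auto
          have vQ: "-u0 \<in> Q" using Qmul[OF zQ u0Q] zm by simp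
          have "-u0 \<noteq> 1" "-u0 \<noteq> -1" using u0 unfolding T_def by (auto simp: minus_equation_iff)
          hence vT: "-u0 \<in> T" using vQ True unfolding T_def S_def by auto
          have "(-u0)^k = (z * u0)^k" using zm by simp
          also have "\<dots> = u0^k" using zk[OF z(2)] by (simp add: power_mult_distrib)
          finally have e: "-u0 = u0" by (rule injT[OF vT u0])
          have "u0 + u0 = 0" by (metis e add.right_inverse)
          hence "2 * u0 = 0" by (simp only: mult_2)
          hence "u0 = 0" using two by simp
          thus False using Hnz u0 TH by auto
        qed
      next
        case False
        hence dd: "d = n" unfolding d_def by simp
        show False
        proof (cases "p = 2")
          case True
          hence "even k" using pk by simp
          then obtain j where j: "k = 2 * j" by (auto elim: evenE)
          have u0H: "u0 \<in> H" using u0 TH by auto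
          have e: "k * (n div 2) = n * j" using j ev by (auto elim!: evenE)
          have "(u0^k)^(n div 2) = u0^(k * (n div 2))" by (simp only: power_mult)
          also have "\<dots> = (u0^n)^j" by (simp only: e power_mult)
          also have "\<dots> = 1" using u0H unfolding H_def by simp
          finally have "(u0^k)^(n div 2) = 1" .
          hence "u0^k \<in> Q" unfolding Q_def by simp
          moreover have "u0^k \<in> T" by (rule clos[OF u0])
          ultimately show False using False unfolding T_def S_def by auto
        next
          case p2: False
          have "p > 2" using prime_ge_2_nat[OF p(1)] p2 by linarith
          hence "odd p" using p(1) prime_odd_nat by blast
          have "p dvd n" using pd dd by simp
          have ndef: "n = 2 * (n div 2)" using ev by simp
          have "p dvd n div 2"
          proof -
            have "coprime p 2" using \<open>odd p\<close> by (simp add: coprime_commute)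
            thus ?thesis using \<open>p dvd n\<close> ndef by (metis coprime_dvd_mult_right_iff)
          qed
          obtain z :: 'b where z: "z^(n div 2) = 1" "z^p = 1" "z \<noteq> 1"
            using exists_root_p[where 'b='b, of "n div 2" p] cQ n2 p \<open>p dvd n div 2\<close> unfolding Q_def by auto
          have zQ: "z \<in> Q" using z unfolding Q_def by simp
          have z2: "z^2 \<noteq> 1"
          proof
            assume h: "z^2 = 1"
            obtain j where j: "p = 2 * j + 1" using \<open>odd p\<close> oddE by blast
            have "z^p = (z^2)^j * z" by (simp add: j power_mult[symmetric] power_add)
            hence "z = 1" using h z(2) by simp
            thus False using z(3) by simp
          qed
          have u0H: "u0 \<in> H" and u0nQ: "u0 \<notin> Q" using u0 False unfolding T_def S_def by auto
          have inS: "u0 * z^j \<in> S" for j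
          proof -
            have zjQ: "z^j \<in> Q" using Qpow[OF zQ] .
            have "u0 * z^j \<in> H" using Hmul[OF u0H] QH zjQ by auto
            moreover have "u0 * z^j \<notin> Q"
            proof
              assume "u0 * z^j \<in> Q"
              hence "u0 * z^j * inverse (z^j) \<in> Q" using Qmul Qinv zjQ by blast
              moreover have "z^j \<in> H" using QH zjQ by blast
              hence "z^j \<noteq> 0" by (rule Hnz)
              hence "u0 * z^j * inverse (z^j) = u0" by (simp add: mult.assoc)
              ultimately show False using u0nQ by metis
            qed
            ultimately show ?thesis using False unfolding S_def by auto
          qed
          have pw: "(u0 * z^j)^k = u0^k" for j
          proof -
            have "(z^j)^k = (z^k)^j" by (simp add: power_mult[symmetric] mult.commute)
            thus ?thesis using zk[OF z(2)] by (simp add: power_mult_distrib)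
          qed
          have one_notS: "(1::'b) \<notin> S" using False unfolding S_def Q_def by auto
          have u0nz: "u0 \<noteq> 0" using Hnz u0H by auto
          show False
          proof (cases "u0 * z = -1")
            case False
            have "u0 * z^1 \<in> T" using inS[of 1] False one_notS unfolding T_def by auto
            hence "u0 * z^1 = u0" using injT[OF _ u0] pw[of 1] by blast
            hence "z = 1" using u0nz by simp
            thus False using z(3) by simp
          next
            case True
            have "u0 * z^2 = (u0 * z) * z" by (simp add: power2_eq_square)
            also have "\<dots> = - z" using True by simp
            finally have e: "u0 * z^2 = - z" .
            have "u0 * z^2 \<noteq> -1" using e z(3) by simp
            hence "u0 * z^2 \<in> T" using inS[of 2] one_notS unfolding T_def by auto
            hence "u0 * z^2 = u0" using injT[OF _ u0] pw[of 2] by blast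
            hence "z^2 = 1" using u0nz by simp
            thus False using z2 by simp
          qed
        qed
      qed
    qed
  next
    assume g: "gcd k d = 1"
    define I where "I = (if b then Q else H)"
    have IH: "I \<subseteq> H" unfolding I_def using QH by auto
    have Ipow: "u^d = 1" if "u \<in> I" for u using that unfolding I_def d_def Q_def H_def by (auto split: if_splits)
    have Imul: "u * v \<in> I" if "u \<in> I" "v \<in> I" for u v using that Qmul Hmul unfolding I_def by (auto split: if_splits)
    have Iinv: "inverse u \<in> I" if "u \<in> I" for u using that Qinv Hinv unfolding I_def by (auto split: if_splits)
    have one_I: "1 \<in> I" unfolding I_def Q_def H_def by auto
    have inj: "u = v" if "u \<in> I" "v \<in> I" "u^k = v^k" for u v
    proof -
      define w where "w = u * inverse v"
      have wI: "w \<in> I" using that Imul Iinv unfolding w_def by auto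
      have vnz: "v \<noteq> 0" using that IH Hnz by auto
      have vk: "v^k \<noteq> 0" using vnz by simp
      have wk: "w^k = 1" unfolding w_def using that(3) vk
        by (simp add: power_mult_distrib power_inverse)
      have wd: "w^d = 1" using Ipow[OF wI] .
      have "k \<noteq> 0" using k by simp
      then obtain x y where xy: "k * x = d * y + gcd k d" using bezout_nat by blast
      hence xy1: "k * x = d * y + 1" using g by simp
      have "w^(k*x) = 1" by (simp add: power_mult wk)
      moreover have "w^(d*y+1) = w" by (simp add: power_add power_mult wd)
      ultimately have "w = 1" using xy1 by simp
      thus ?thesis unfolding w_def using vnz by (simp add: field_simps)
    qed
    have TI: "T \<subseteq> I" unfolding T_def S_def I_def by auto
    have kodd: "odd k" if "\<not> b"
    proof
      assume "even k"
      hence "2 dvd gcd k d" using that ev unfolding d_def by simp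
      thus False using g by simp
    qed
    have clos: "u^k \<in> T" if u: "u \<in> T" for u
    proof -
      have uH: "u \<in> H" using u TH by auto
      have "u^k \<in> S"
      proof (cases b)
        case True
        thus ?thesis using u Qpow unfolding T_def S_def by auto
      next
        case False
        hence "u^(n div 2) \<noteq> 1" using u unfolding T_def S_def Q_def by auto
        hence "u^(n div 2) = -1" using cases2[OF uH] by auto
        have "(u^k)^(n div 2) = (u^(n div 2))^k" by (simp only: power_mult[symmetric] mult.commute)
        hence "(u^k)^(n div 2) = (-1)^k" using \<open>u^(n div 2) = -1\<close> by simp
        also have "\<dots> = -1" using kodd[OF False] by simp
        finally have "u^k \<notin> Q" using m1 unfolding Q_def by auto
        thus ?thesis using False Hpow[OF uH] unfolding S_def by auto
      qed
      moreover have "u^k \<noteq> 1"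
      proof
        assume "u^k = 1"
        hence "u = 1" using inj[of u 1] TI u one_I by auto
        thus False using u unfolding T_def by auto
      qed
      moreover have "u^k \<noteq> -1"
      proof
        assume h: "u^k = -1"
        have u2I: "u^2 \<in> I" using Imul[of u u] TI u by (auto simp: power2_eq_square)
        have "(u^2)^k = (u^k)^2" by (simp add: power_mult[symmetric] mult.commute)
        also have "\<dots> = 1" using h by simp
        finally have "u^2 = 1" using inj[of "u^2" 1] u2I one_I by auto
        hence "u = 1 \<or> u = -1" using sq1 by blast
        thus False using u unfolding T_def by auto
      qed
      ultimately show ?thesis unfolding T_def by auto
    qed
    have fT: "finite T" using fH TH finite_subset by blast
    have pT: "(\<lambda>u. u^k) ` T = T"
      by (rule endo_inj_surj[OF fT]) (use clos inj TI in \<open>auto simp: inj_on_def\<close>)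
    have fA: "f ` A \<subseteq> A"
    proof
      fix x assume "x \<in> f ` A"
      then obtain y where y: "y \<in> A" "x = f y" by auto
      then obtain u where u: "u \<in> T" "y = \<phi> u" using hsurj by auto
      have "x = \<phi> (u^k)" using hf u y TH by auto
      thus "x \<in> A" using hA clos[OF u(1)] TH Hpow u(1) by auto
    qed
    have injA: "inj_on f A"
    proof (rule inj_onI)
      fix x y assume x: "x \<in> A" and y: "y \<in> A" and e: "f x = f y"
      obtain u where u: "u \<in> T" "x = \<phi> u" using hsurj x by auto
      obtain v where v: "v \<in> T" "y = \<phi> v" using hsurj y by auto
      have uH': "u \<in> H" "v \<in> H" using u v TH by auto
      have "f (\<phi> u) = \<phi> (u^k)" "f (\<phi> v) = \<phi> (v^k)" using hf uH' by auto
      hence "\<phi> (u^k) = \<phi> (v^k)" using e u v by simp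
      hence "v^k = u^k \<or> v^k = inverse (u^k)" using hinj clos u v by blast
      thus "x = y"
      proof
        assume "v^k = u^k"
        hence "v = u" using inj TI u v by auto
        thus ?thesis using u v by simp
      next
        assume "v^k = inverse (u^k)"
        hence "v^k = (inverse u)^k" by (simp add: power_inverse)
        hence "v = inverse u" using inj TI u v Tinv by auto
        thus ?thesis using u v hinv TH by auto
      qed
    qed
    have sA: "A \<subseteq> f ` A"
    proof
      fix x assume x: "x \<in> A"
      obtain w where w: "w \<in> T" "x = \<phi> w" using hsurj x by auto
      obtain u where u: "u \<in> T" "w = u^k" using w pT by (metis imageE)
      have "x = f (\<phi> u)" using hf u w TH by auto
      moreover have "\<phi> u \<in> A" using hA u TH by auto
      ultimately show "x \<in> f ` A" by auto
    qed
    show "bij_betw f A A" unfolding bij_betw_def using injA fA sA by auto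
  qed
  thus ?thesis unfolding d_def .
qed


lemma card_ge3:
  assumes "odd (card (UNIV::'a::{field,finite} set))"
  shows "card (UNIV::'a set) \<ge> 3"
proof -
  have "card {0::'a, 1} \<le> card (UNIV::'a set)" by (rule card_mono) auto
  hence "card (UNIV::'a set) \<ge> 2" by simp
  moreover have "card (UNIV::'a set) \<noteq> 2" using assms by auto
  ultimately show ?thesis by linarith
qed

lemma HF_eq:
  "{y::'a::{field,finite}. y^(card (UNIV::'a set) - 1) = 1} = UNIV - {0}"
proof -
  have "card (UNIV::'a set) \<ge> 2"
  proof -
    have "card {0::'a, 1} \<le> card (UNIV::'a set)" by (rule card_mono) auto
    thus ?thesis by simp
  qed
  hence "card (UNIV::'a set) - 1 \<noteq> 0" by simp
  thus ?thesis using fermat_ff[where 'b='a] by (auto simp: zero_power)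
qed

lemma HF_card:
  "card {y::'a::{field,finite}. y^(card (UNIV::'a set) - 1) = 1} = card (UNIV::'a set) - 1"
  unfolding HF_eq by (simp add: card_Diff_singleton)

lemma QF_eq:
  assumes "odd (card (UNIV::'a::{field,finite} set))"
  shows "{y::'a. y^((card (UNIV::'a set) - 1) div 2) = 1} = (\<lambda>y. y^2) ` (UNIV - {0})"
proof -
  have "card (UNIV::'a set) \<ge> 3" using card_ge3 assms by blast
  hence "card (UNIV::'a set) - 1 > 0" by simp
  moreover have "even (card (UNIV::'a set) - 1)" using assms by simp
  ultimately show ?thesis using sq_image(1)[where 'b='a, OF HF_card] HF_eq[where 'a='a] by simp
qed

lemma euler_qchar:
  assumes "odd (card (UNIV::'a::{field,finite} set))"
  shows "(of_int (qchar a) :: 'a) = a ^ ((card (UNIV::'a set) - 1) div 2)"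
proof -
  let ?m = "(card (UNIV::'a set) - 1) div 2"
  have m1: "?m \<ge> 1" using card_ge3[OF assms] by linarith
  show ?thesis
  proof (cases "a = 0")
    case True
    thus ?thesis using m1 by (simp add: qchar_def zero_power)
  next
    case False
    show ?thesis
    proof (cases "\<exists>y. y^2 = a")
      case True
      then obtain y where y: "y^2 = a" by auto
      hence "y \<noteq> 0" using False by auto
      hence "a \<in> (\<lambda>y. y^2) ` (UNIV - {0})" using y by auto
      hence "a^?m = 1" using QF_eq[OF assms] by blast
      thus ?thesis using False True by (simp add: qchar_def)
    next
      case nsq: False
      have "a \<notin> (\<lambda>y. y^2) ` (UNIV - {0})" using nsq by auto
      hence "a^?m \<noteq> 1" using QF_eq[OF assms] by blast
      moreover have "a^(card (UNIV::'a set) - 1) = 1" using fermat_ff False by blast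
      ultimately have "a^?m = -1"
        using pow_nhalf_cases[of a "card (UNIV::'a set) - 1"] assms by simp
      thus ?thesis using False nsq by (simp add: qchar_def)
    qed
  qed
qed

lemma qchar_range: "qchar a \<in> {-1, 0, 1}"
  by (simp add: qchar_def)

lemma of_int_inj3:
  assumes "(2::'a::field) \<noteq> 0" "i \<in> {-1,0,1}" "j \<in> {-1,0,1}" "(of_int i::'a) = of_int j"
  shows "i = j"
proof -
  have m1: "(-1::'a) \<noteq> 1"
  proof
    assume h: "(-1::'a) = 1"
    have "(2::'a) = 1 + 1" by simp
    also have "\<dots> = 1 + -1" using h by simp
    finally show False using assms(1) by simp
  qed
  show ?thesis using assms(2-4) m1 by auto
qed

lemma qchar_mult:
  assumes "odd (card (UNIV::'a::{field,finite} set))"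
  shows "qchar ((a::'a) * b) = qchar a * qchar b"
proof -
  have two: "(2::'a) \<noteq> 0" using two_ne_zero_ff assms by blast
  have "(of_int (qchar (a*b))::'a) = of_int (qchar a * qchar b)"
    using euler_qchar[OF assms] by (simp add: power_mult_distrib)
  moreover have "qchar a * qchar b \<in> {-1,0,1}" using qchar_range[of a] qchar_range[of b] by auto
  ultimately show ?thesis using of_int_inj3[OF two qchar_range] by blast
qed

lemma qchar_minus1:
  assumes "odd (card (UNIV::'a::{field,finite} set))"
  shows "qchar (-1::'a) = (-1) ^ ((card (UNIV::'a set) - 1) div 2)"
proof -
  have two: "(2::'a) \<noteq> 0" using two_ne_zero_ff assms by blast
  have "(of_int (qchar (-1::'a))::'a) = of_int ((-1) ^ ((card (UNIV::'a set) - 1) div 2))"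
    using euler_qchar[OF assms] by simp
  moreover have "((-1::int) ^ ((card (UNIV::'a set) - 1) div 2)) \<in> {-1,0,1}"
    by (cases "even ((card (UNIV::'a set) - 1) div 2)") auto
  ultimately show ?thesis using of_int_inj3[OF two qchar_range] by blast
qed

lemma qchar_sq: "b \<noteq> 0 \<Longrightarrow> qchar ((b::'a::field)^2) = 1"
  by (auto simp: qchar_def)

lemma qchar_zero_iff: "qchar a = 0 \<longleftrightarrow> a = 0"
  by (simp add: qchar_def)

lemma F_class:
  assumes odd: "odd (card (UNIV::'a::{field,finite} set))"
    and u: "(u::'a) \<noteq> 0" "u \<noteq> 1" "u \<noteq> -1"
  shows "qchar (u + inverse u - 2) = qchar u \<and> qchar (u + inverse u + 2) = qchar u"
proof -
  have inv: "qchar (inverse u) = qchar u"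
  proof -
    have eq: "inverse u = u * (inverse u)^2" using u by (simp add: power2_eq_square)
    have "qchar (inverse u) = qchar (u * (inverse u)^2)" by (rule arg_cong[where f=qchar, OF eq])
    also have "\<dots> = qchar u * qchar ((inverse u)^2)" by (rule qchar_mult[OF odd])
    finally have "qchar (inverse u) = qchar u * qchar ((inverse u)^2)" .
    moreover have "qchar ((inverse u)^2) = 1" using u by (intro qchar_sq) simp
    ultimately show ?thesis by simp
  qed
  have e1: "u + inverse u - 2 = (u - 1)^2 * inverse u" using u
    by (simp add: field_simps power2_eq_square)
  have e2: "u + inverse u + 2 = (u + 1)^2 * inverse u" using u
    by (simp add: field_simps power2_eq_square)
  have n1: "u - 1 \<noteq> 0" using u by simp
  have n2: "u + 1 \<noteq> 0"
  proof
    assume "u + 1 = 0"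
    hence "u = -1" by (simp add: eq_neg_iff_add_eq_0)
    thus False using u by simp
  qed
  have "qchar (u + inverse u - 2) = qchar ((u - 1)^2) * qchar (inverse u)"
    unfolding e1 by (rule qchar_mult[OF odd])
  moreover have "qchar (u + inverse u + 2) = qchar ((u + 1)^2) * qchar (inverse u)"
    unfolding e2 by (rule qchar_mult[OF odd])
  ultimately show ?thesis using qchar_sq[OF n1] qchar_sq[OF n2] inv by simp
qed

lemma F_cover:
  assumes odd: "odd (card (UNIV::'a::{field,finite} set))"
    and x: "qchar ((x::'a) * x - 4) = 1"
  shows "\<exists>u. u \<noteq> 0 \<and> u \<noteq> 1 \<and> u \<noteq> -1 \<and> x = u + inverse u"
proof -
  have two: "(2::'a) \<noteq> 0" using two_ne_zero_ff odd by blast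
  obtain s where s: "s^2 = x * x - 4" using x by (auto simp: qchar_def split: if_splits)
  define u where "u = (x + s) / 2"
  have "(4::'a) = 2 * 2" by simp
  hence four: "(4::'a) \<noteq> 0" using two by (simp only: mult_eq_0_iff) simp
  have prod: "u * ((x - s) / 2) = 1" unfolding u_def using s two four
    by (simp add: field_simps power2_eq_square)
  hence unz: "u \<noteq> 0" by auto
  have iu: "inverse u = (x - s) / 2" using inverse_unique[OF prod] .
  have "u + inverse u = u + (x - s) / 2" by (simp only: iu)
  also have "\<dots> = (x + s) / 2 + (x - s) / 2" by (simp only: u_def)
  also have "\<dots> = (2 * x) / 2" by (simp add: add_divide_distrib[symmetric])
  also have "\<dots> = x" using two by simp
  finally have xe: "x = u + inverse u" by simp
  have "x * x - 4 \<noteq> 0" using x by (auto simp: qchar_def)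
  hence "u \<noteq> 1 \<and> u \<noteq> -1" using xe by auto
  thus ?thesis using unz xe by blast
qed

lemma F_degen:
  assumes odd: "odd (card (UNIV::'a::{field,finite} set))"
    and x: "qchar ((x::'a) * x - 4) = 0"
  shows "x = 2 \<or> x = -2"
proof -
  have "x * x = 4" using x by (simp add: qchar_def split: if_splits)
  hence "(x - 2) * (x + 2) = 0" by (simp add: algebra_simps)
  thus ?thesis by (auto simp: eq_neg_iff_add_eq_0)
qed


definition irr_pair :: "'a::comm_ring_1 \<times> 'a" where
  "irr_pair = (SOME sp. \<forall>r. r * r - fst sp * r + snd sp \<noteq> 0)"

datatype 'a qext = QE (qre: 'a) (qim: 'a)

lemma qext_eq_iff: "x = y \<longleftrightarrow> qre x = qre y \<and> qim x = qim y"
  by (cases x; cases y) auto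

instantiation qext :: (comm_ring_1) comm_ring_1
begin
definition "0 = QE 0 0"
definition "1 = QE 1 0"
definition "x + y = QE (qre x + qre y) (qim x + qim y)"
definition "x - y = QE (qre x - qre y) (qim x - qim y)"
definition "- x = QE (- qre x) (- qim x)"
definition "x * y = QE (qre x * qre y - snd irr_pair * qim x * qim y)
    (qre x * qim y + qim x * qre y + fst irr_pair * qim x * qim y)"
instance
  by standard (simp_all add: qext_eq_iff zero_qext_def one_qext_def plus_qext_def minus_qext_def
      uminus_qext_def times_qext_def algebra_simps)
end

lemma qext_simps [simp]:
  "qre (0::'a::comm_ring_1 qext) = 0" "qim (0::'a qext) = 0"
  "qre (1::'a qext) = 1" "qim (1::'a qext) = 0"
  "qre (x + y) = qre x + qre y" "qim (x + y) = qim x + qim y"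
  "qre (x - y) = qre x - qre y" "qim (x - y) = qim x - qim y"
  "qre (- x) = - qre x" "qim (- x) = - qim x"
  by (simp_all add: zero_qext_def one_qext_def plus_qext_def minus_qext_def uminus_qext_def)

lemma qext_mult_simps [simp]:
  "qre (x * y) = qre x * qre y - snd irr_pair * qim x * qim (y::'a::comm_ring_1 qext)"
  "qim (x * y) = qre x * qim y + qim x * qre y + fst irr_pair * qim x * qim y"
  by (simp_all add: times_qext_def)

lemma irr_exists:
  "\<exists>sp. \<forall>r::'a::{field,finite}. r * r - fst sp * r + snd sp \<noteq> 0"
proof -
  let ?g = "\<lambda>(r1::'a, r2::'a). (r1 + r2, r1 * r2)"
  have "\<not> inj ?g"
  proof
    assume "inj ?g"
    moreover have "?g (0, 1) = ?g (1, 0)" by simp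
    ultimately have "((0::'a), (1::'a)) = (1, 0)" by (meson injD)
    thus False by simp
  qed
  hence "\<not> surj ?g" using finite_UNIV_surj_inj[of ?g] by auto
  then obtain sp where sp: "sp \<notin> range ?g" by auto
  have "\<forall>r. r * r - fst sp * r + snd sp \<noteq> 0"
  proof (intro allI notI)
    fix r assume h: "r * r - fst sp * r + snd sp = 0"
    have "?g (r, fst sp - r) = (fst sp, r * (fst sp - r))" by simp
    also have "r * (fst sp - r) = snd sp" using h by (simp add: algebra_simps eq_neg_iff_add_eq_0)
    finally have "?g (r, fst sp - r) = sp" by simp
    thus False using sp by (metis rangeI)
  qed
  thus ?thesis by blast
qed

lemma irr_ok: "r * r - fst irr_pair * r + snd irr_pair \<noteq> (0::'a::{field,finite})"
  using someI_ex[OF irr_exists[where 'a='a]] unfolding irr_pair_def by blast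


definition qnorm :: "'a::comm_ring_1 qext \<Rightarrow> 'a" where
  "qnorm x = qre x * qre x + fst irr_pair * qre x * qim x + snd irr_pair * qim x * qim x"

lemma qnorm_nz:
  fixes x :: "'a::{field,finite} qext"
  assumes "x \<noteq> 0"
  shows "qnorm x \<noteq> 0"
proof (cases "qim x = 0")
  case True
  hence "qre x \<noteq> 0" using assms by (simp add: qext_eq_iff)
  thus ?thesis using True by (simp add: qnorm_def)
next
  case False
  define r where "r = - qre x / qim x"
  have "qnorm x = (qim x * qim x) * (r * r - fst irr_pair * r + snd irr_pair)"
    unfolding r_def qnorm_def using False by (simp add: field_simps)
  thus ?thesis using False irr_ok[of r] by simp
qed

lemma inv_helper:
  fixes a b s p N :: "'a::field"
  assumes "N \<noteq> 0" "N = a*a + s*a*b + p*b*b"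
  shows "(a + s*b)/N * a - p * (- b / N) * b = 1"
    and "(a + s*b)/N * b + (- b / N) * a + s * (- b / N) * b = 0"
proof -
  have "(a + s*b)/N * a - p * (- b / N) * b = (a*a + s*a*b + p*b*b) / N"
    using assms(1) by (simp add: field_simps)
  thus "(a + s*b)/N * a - p * (- b / N) * b = 1" using assms by simp
  show "(a + s*b)/N * b + (- b / N) * a + s * (- b / N) * b = 0"
    using assms(1) by (simp add: field_simps)
qed

instantiation qext :: ("{field,finite}") field
begin
definition "inverse x = QE ((qre x + fst irr_pair * qim x) / qnorm x) (- qim x / qnorm x)"
definition "x div y = x * inverse (y::'a qext)"
instance
proof
  fix x y :: "'a qext"
  show "x \<noteq> 0 \<Longrightarrow> inverse x * x = 1"
    using qnorm_nz[of x] inv_helper[of "qnorm x" "qre x" "fst irr_pair" "qim x" "snd irr_pair"]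
    by (simp add: qext_eq_iff inverse_qext_def qnorm_def)
  show "x div y = x * inverse y" by (simp add: divide_qext_def)
  show "inverse (0::'a qext) = 0" by (simp add: qext_eq_iff inverse_qext_def)
qed
end

instance qext :: (finite) finite
proof
  have "(UNIV :: 'a qext set) = (\<lambda>(a,b). QE a b) ` UNIV"
    by (auto simp: image_iff intro: qext.exhaust) (metis qext.exhaust)
  thus "finite (UNIV :: 'a qext set)" by (metis finite_UNIV finite_imageI)
qed

lemma card_qext: "card (UNIV :: 'a::finite qext set) = card (UNIV :: 'a set) ^ 2"
proof -
  have b: "bij_betw (\<lambda>(a,b). QE a b) (UNIV :: ('a \<times> 'a) set) UNIV"
    unfolding bij_betw_def inj_on_def
    by (auto simp: image_iff) (metis qext.exhaust)
  have "card (UNIV :: 'a qext set) = card (UNIV :: ('a \<times> 'a) set)"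
    using bij_betw_same_card[OF b] by simp
  thus ?thesis by (simp add: card_cartesian_product[symmetric] power2_eq_square)
qed


definition iota :: "'a::comm_ring_1 \<Rightarrow> 'a qext" where "iota a = QE a 0"

lemma iota_hom [simp]:
  "iota (a + b) = iota a + iota b" "iota (a - b) = iota a - iota b" "iota (- a) = - iota a"
  "iota (a * b) = iota a * iota b" "iota 0 = 0" "iota 1 = 1"
  by (simp_all add: iota_def qext_eq_iff)

lemma iota_2 [simp]: "iota 2 = (2::'a::comm_ring_1 qext)"
proof -
  have "iota (1 + 1) = (1 + 1::'a qext)" by (simp only: iota_hom)
  thus ?thesis by simp
qed

lemma iota_pow [simp]: "iota (a ^ n) = iota a ^ n"
  by (induction n) simp_all

lemma iota_inj: "iota a = iota b \<longleftrightarrow> a = b"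
  by (simp add: iota_def)

lemma iota_inverse [simp]: "iota (inverse a) = inverse (iota (a::'a::{field,finite}))"
  by (simp add: iota_def qext_eq_iff inverse_qext_def qnorm_def divide_inverse)
     (metis inverse_inverse_eq mult.commute nonzero_inverse_mult_distrib right_inverse
       divide_inverse div_by_0 divide_self_if inverse_eq_divide)

lemma iota_dickson: "dickson k (iota x) = iota (dickson k x)"
proof (induction k rule: less_induct)
  case (less k)
  show ?case
  proof (cases k)
    case 0 then show ?thesis by simp
  next
    case (Suc j)
    show ?thesis
    proof (cases j)
      case 0 then show ?thesis using Suc by simp
    next
      case (Suc i)
      have "dickson k (iota x) = iota x * dickson (Suc i) (iota x) - dickson i (iota x)"
        using \<open>k = Suc j\<close> Suc by simp
      also have "\<dots> = iota (x * dickson (Suc i) x - dickson i x)"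
        using less \<open>k = Suc j\<close> Suc by simp
      finally show ?thesis using \<open>k = Suc j\<close> Suc by simp
    qed
  qed
qed

definition tq :: "'a::comm_ring_1 qext" where "tq = QE 0 1"

lemma QE_decomp: "QE a b = iota a + iota b * tq"
  by (simp add: iota_def tq_def qext_eq_iff)


lemma card_ge2: "card (UNIV::'a::{field,finite} set) \<ge> 2"
proof -
  have "card {0::'a, 1} \<le> card (UNIV::'a set)" by (rule card_mono) auto
  thus ?thesis by simp
qed

lemma pow_card: "(a::'a::{field,finite}) ^ card (UNIV::'a set) = a"
proof (cases "a = 0")
  case True thus ?thesis using card_ge2[where 'a='a] by (simp add: zero_power)
next
  case False
  have "a ^ card (UNIV::'a set) = a ^ (card (UNIV::'a set) - 1) * a"
    using card_ge2[where 'a='a] by (simp add: power_Suc2[symmetric])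
  thus ?thesis using fermat_ff[OF False] by simp
qed

lemma iota_frob: "iota (a::'a::{field,finite}) ^ card (UNIV::'a set) = iota a"
proof -
  have "iota a ^ card (UNIV::'a set) = iota (a ^ card (UNIV::'a set))" by (simp only: iota_pow)
  also have "\<dots> = iota a" by (simp only: pow_card)
  finally show ?thesis .
qed

lemma frob_add_const:
  fixes y :: "'a::{field,finite} qext"
  shows "(y + iota c) ^ card (UNIV::'a set) = y ^ card (UNIV::'a set) + iota c"
proof -
  let ?q = "card (UNIV::'a set)"
  have q1: "?q \<ge> 1" using card_ge2[where 'a='a] by simp
  let ?P = "[:iota c, 1:] ^ ?q - monom 1 ?q - [:iota c:]"
  have ev: "poly ?P z = (z + iota c)^?q - z^?q - iota c" for z
    by (simp add: poly_monom add.commute)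
  have roots: "range iota \<subseteq> {z. poly ?P z = 0}"
  proof
    fix z assume "z \<in> range (iota :: 'a \<Rightarrow> 'a qext)"
    then obtain r where r: "z = iota r" by auto
    have "(iota r + iota c)^?q = iota (r + c)" by (simp only: iota_hom(1)[symmetric] iota_frob)
    thus "z \<in> {z. poly ?P z = 0}" using r ev by (simp add: iota_frob)
  qed
  have "?P = 0"
  proof (rule ccontr)
    assume nz: "?P \<noteq> 0"
    have d1: "degree ([:iota c, 1:] ^ ?q - monom 1 ?q) \<le> ?q"
      by (rule degree_diff_le) (simp_all add: degree_monom_le degree_linear_power)
    have "degree ?P \<le> ?q" by (rule degree_diff_le[OF d1]) simp
    moreover have "coeff ?P ?q = 0"
    proof -
      have "coeff [:iota c:] ?q = 0" using q1 by (cases ?q) auto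
      thus ?thesis by (simp add: coeff_linear_power)
    qed
    ultimately have "degree ?P < ?q" using nz eq_zero_or_degree_less by blast
    moreover have "card {z. poly ?P z = 0} \<le> degree ?P" by (rule card_poly_roots_bound[OF nz])
    moreover have "card (range (iota :: 'a \<Rightarrow> 'a qext)) = ?q"
      by (simp add: card_image inj_on_def iota_inj)
    moreover have "card (range (iota :: 'a \<Rightarrow> 'a qext)) \<le> card {z. poly ?P z = 0}"
      by (rule card_mono[OF _ roots]) simp
    ultimately show False by linarith
  qed
  hence "poly ?P y = 0" by simp
  hence "(y + iota c)^?q - y^?q - iota c = 0" by (simp only: ev)
  thus ?thesis by (simp add: algebra_simps)
qed

definition frob :: "'a::{field,finite} qext \<Rightarrow> 'a qext" where
  "frob y = y ^ card (UNIV::'a set)"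

lemma frob_mult: "frob (x * y) = frob x * frob y"
  by (simp add: frob_def power_mult_distrib)

lemma frob_iota: "frob (iota a) = iota a"
  by (simp add: frob_def iota_frob)

lemma frob_QE: "frob (QE a b) = iota a + iota b * frob tq"
proof -
  have "frob (QE a b) = frob (iota b * tq + iota a)" by (simp add: QE_decomp add.commute)
  also have "\<dots> = frob (iota b * tq) + iota a" unfolding frob_def by (rule frob_add_const)
  also have "\<dots> = iota a + iota b * frob tq" by (simp add: frob_mult frob_iota)
  finally show ?thesis .
qed

lemma frob_add: "frob (x + y) = frob x + frob (y::'a::{field,finite} qext)"
proof -
  obtain a b where x: "x = QE a b" by (cases x)
  obtain c d where y: "y = QE c d" by (cases y)
  have "x + y = QE (a + c) (b + d)" using x y by (simp add: qext_eq_iff)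
  thus ?thesis using x y by (simp add: frob_QE algebra_simps)
qed

lemma frob_zero: "frob (0::'a::{field,finite} qext) = 0"
  using card_ge2[where 'a='a] by (simp add: frob_def zero_power)

lemma frob_one: "frob (1::'a::{field,finite} qext) = 1"
  by (simp add: frob_def)

lemma frob_uminus: "frob (- x) = - frob (x::'a::{field,finite} qext)"
proof -
  have "frob (- x) + frob x = frob (- x + x)" by (rule frob_add[symmetric])
  also have "\<dots> = 0" by (simp add: frob_zero)
  finally have "frob (- x) + frob x = 0" .
  thus ?thesis by (simp add: eq_neg_iff_add_eq_0)
qed

lemma frob_diff: "frob (x - y) = frob x - frob (y::'a::{field,finite} qext)"
  using frob_add[of x "-y"] frob_uminus[of y] by simp

lemma frob_inverse: "frob (inverse x) = inverse (frob (x::'a::{field,finite} qext))"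
  by (simp add: frob_def power_inverse)

lemma frob_divide: "frob (x / y) = frob x / frob (y::'a::{field,finite} qext)"
  by (simp add: divide_inverse frob_mult frob_inverse)

lemma frob_2: "frob (2::'a::{field,finite} qext) = 2"
  using frob_iota[of "2::'a"] by simp

lemma fixed_iota:
  fixes y :: "'a::{field,finite} qext"
  assumes "frob y = y"
  shows "\<exists>a. y = iota a"
proof -
  let ?q = "card (UNIV::'a set)"
  let ?R = "{z::'a qext. z ^ ?q = z}"
  have q1: "?q - 1 \<ge> 1" using card_ge2[where 'a='a] by simp
  have sub: "?R \<subseteq> insert 0 {z. z^(?q - 1) = 1}"
  proof
    fix z assume "z \<in> ?R"
    hence h: "z^(?q - 1) * z = z" using card_ge2[where 'a='a]
      by (simp add: power_Suc2[symmetric])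
    show "z \<in> insert 0 {z. z^(?q - 1) = 1}"
    proof (cases "z = 0")
      case False thus ?thesis using h by simp
    qed simp
  qed
  have "card ?R \<le> card (insert 0 {z::'a qext. z^(?q - 1) = 1})" by (rule card_mono[OF _ sub]) simp
  also have "\<dots> \<le> Suc (card {z::'a qext. z^(?q - 1) = 1})" by (rule card_insert_le_m1) simp_all
  also have "\<dots> \<le> Suc (?q - 1)" using roots_bound[OF q1, where c="1::'a qext"] by simp
  also have "\<dots> = ?q" using card_ge2[where 'a='a] by simp
  finally have cR: "card ?R \<le> ?q" .
  have sub2: "range iota \<subseteq> ?R" by (auto simp: iota_frob)
  have "card (range (iota :: 'a \<Rightarrow> 'a qext)) = ?q"
    by (simp add: card_image inj_on_def iota_inj)
  moreover have "card (range (iota :: 'a \<Rightarrow> 'a qext)) \<le> card ?R"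
    by (rule card_mono[OF _ sub2]) simp
  ultimately have "card (range (iota :: 'a \<Rightarrow> 'a qext)) = card ?R" using cR by linarith
  hence "range iota = ?R" by (rule card_subset_eq[OF _ sub2, rotated]) simp
  moreover have "y \<in> ?R" using assms by (simp add: frob_def)
  ultimately show ?thesis by auto
qed


lemma two_K:
  assumes "odd (card (UNIV::'a::{field,finite} set))"
  shows "(2::'a qext) \<noteq> 0"
proof -
  have "(2::'a) \<noteq> 0" using two_ne_zero_ff assms by blast
  hence "iota (2::'a) \<noteq> iota 0" using iota_inj by blast
  thus ?thesis by simp
qed

lemma HK_card:
  "card {y::'a::{field,finite} qext. y^(card (UNIV::'a set)^2 - 1) = 1} = card (UNIV::'a set)^2 - 1"
  using HF_card[where 'a="'a qext"] by (simp add: card_qext)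

lemma C_card:
  assumes "odd (card (UNIV::'a::{field,finite} set))"
  shows "card {y::'a qext. y^(card (UNIV::'a set) + 1) = 1} = card (UNIV::'a set) + 1"
proof -
  let ?q = "card (UNIV::'a set)"
  let ?C = "{y::'a qext. y^(?q + 1) = 1}"
  let ?U = "UNIV - {0::'a qext}"
  have q2: "?q \<ge> 2" using card_ge2[where 'a='a] .
  have qq: "(?q - 1) * (?q + 1) = ?q^2 - 1" using q2
    by (simp add: power2_eq_square algebra_simps diff_mult_distrib)
  have img: "(\<lambda>y. y^(?q - 1)) ` ?U \<subseteq> ?C"
  proof
    fix z assume "z \<in> (\<lambda>y. y^(?q - 1)) ` ?U"
    then obtain y where y: "y \<noteq> 0" "z = y^(?q - 1)" by auto
    have "z^(?q+1) = y^((?q - 1) * (?q + 1))" by (simp only: y(2) power_mult)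
    also have "\<dots> = y^(card (UNIV::'a qext set) - 1)" by (simp only: qq card_qext)
    also have "\<dots> = 1" by (rule fermat_ff[OF y(1)])
    finally show "z \<in> ?C" by simp
  qed
  have "card ?U \<le> (?q - 1) * card ((\<lambda>y. y^(?q - 1)) ` ?U)"
  proof (rule fiber_count)
    show "finite ?U" by simp
    fix z :: "'a qext"
    have "card {y. y^(?q - 1) = z} \<le> ?q - 1" using q2 roots_bound[of "?q - 1" z] by simp
    moreover have "{y \<in> ?U. y^(?q - 1) = z} \<subseteq> {y. y^(?q - 1) = z}" by auto
    ultimately show "card {y \<in> ?U. y^(?q - 1) = z} \<le> ?q - 1"
      by (meson card_mono finite le_trans)
  qed
  also have "\<dots> \<le> (?q - 1) * card ?C" by (intro mult_le_mono2 card_mono img) simp_all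
  finally have "card ?U \<le> (?q - 1) * card ?C" .
  moreover have "card ?U = ?q^2 - 1" by (simp add: card_Diff_singleton card_qext)
  ultimately have "(?q - 1) * (?q + 1) \<le> (?q - 1) * card ?C" by (simp only: qq)
  moreover have "(?q-1)*(?q+1) \<le> (?q-1)*card ?C \<longleftrightarrow> (0 < ?q-1 \<longrightarrow> ?q+1 \<le> card ?C)"
    by (rule mult_le_cancel1)
  moreover have "0 < ?q - 1" using q2 by simp
  ultimately have ge: "?q + 1 \<le> card ?C" by blast
  have "card ?C \<le> ?q + 1" using roots_bound[of "?q + 1" "1::'a qext"] by simp
  thus ?thesis using ge by linarith
qed

lemma C_frob:
  assumes "u^(card (UNIV::'a set) + 1) = (1::'a::{field,finite} qext)"
  shows "frob u = inverse u"
proof -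
  have "frob u * u = 1" using assms by (simp add: frob_def mult.commute)
  thus ?thesis by (metis inverse_unique mult.commute)
qed

definition phiK :: "'a::{field,finite} qext \<Rightarrow> 'a" where
  "phiK u = qre (u + inverse u)"

lemma phiK_iota:
  assumes "u^(card (UNIV::'a set) + 1) = (1::'a::{field,finite} qext)"
  shows "iota (phiK u) = u + inverse u"
proof -
  have "frob (u + inverse u) = inverse u + u"
    using C_frob[OF assms] by (simp add: frob_add frob_inverse)
  hence "frob (u + inverse u) = u + inverse u" by (simp add: add.commute)
  then obtain a where a: "u + inverse u = iota a" using fixed_iota by blast
  thus ?thesis unfolding phiK_def by (simp add: iota_def)
qed

lemma NS_lemma:
  assumes odd: "odd (card (UNIV::'a::{field,finite} set))"
    and z: "(z::'a qext) \<noteq> 0" "frob z = - z" "z^2 = iota c"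
  shows "qchar c = -1"
proof -
  have c0: "c \<noteq> 0"
  proof
    assume "c = 0"
    hence "z^2 = 0" using z(3) by simp
    thus False using z(1) by simp
  qed
  have "\<not> (\<exists>y. y^2 = c)"
  proof
    assume "\<exists>y. y^2 = c"
    then obtain r where r: "r^2 = c" by auto
    hence "z^2 = (iota r)^2" using z by (simp flip: iota_pow)
    hence "z = iota r \<or> z = - iota r" by (simp add: power2_eq_iff)
    hence "frob z = z"
    proof
      assume "z = iota r" thus ?thesis by (simp add: frob_iota)
    next
      assume "z = - iota r" thus ?thesis by (simp add: frob_iota frob_uminus)
    qed
    hence "z + z = 0" using z(2) by (metis add.right_inverse)
    hence "2 * z = 0" by (simp only: mult_2)
    thus False using z(1) two_K[OF odd] by simp
  qed
  thus ?thesis using c0 by (simp add: qchar_def)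
qed


lemma C_nz: "u^(card (UNIV::'a set) + 1) = (1::'a::{field,finite} qext) \<Longrightarrow> u \<noteq> 0"
  by auto

lemma sq_eq1: "(u::'b::field) * u = 1 \<Longrightarrow> u = 1 \<or> u = -1"
  using power2_eq_1_iff[of u] by (simp add: power2_eq_square)

lemma phiK_dickson:
  assumes "u^(card (UNIV::'a set) + 1) = (1::'a::{field,finite} qext)"
  shows "dickson k (phiK u) = phiK (u^k)"
proof -
  have u0: "u \<noteq> 0" using assms by auto
  have "(u^k)^(card (UNIV::'a set) + 1) = (u^(card (UNIV::'a set) + 1))^k"
    by (simp only: power_mult[symmetric] mult.commute)
  hence uk: "(u^k)^(card (UNIV::'a set) + 1) = 1" using assms by simp
  have "iota (dickson k (phiK u)) = dickson k (u + inverse u)"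
    by (simp add: iota_dickson[symmetric] phiK_iota[OF assms])
  also have "\<dots> = u^k + (inverse u)^k" by (rule dickson_uv) (simp add: u0)
  also have "\<dots> = iota (phiK (u^k))" by (simp add: phiK_iota[OF uk] power_inverse)
  finally show ?thesis by (simp add: iota_inj)
qed

lemma phiK_inv: "phiK (inverse u) = phiK u"
  by (simp add: phiK_def add.commute)

lemma inv_sum_eq:
  fixes u v :: "'b::field"
  assumes "u \<noteq> 0" "v \<noteq> 0" "u + inverse u = v + inverse v"
  shows "v = u \<or> v = inverse u"
proof -
  have "(u - v) * (u * v - 1) = 0" using assms by (simp add: field_simps)
  hence "u = v \<or> u * v = 1" by auto
  thus ?thesis using assms by (auto simp: field_simps)
qed

lemma phiK_eq:
  assumes "u^(card (UNIV::'a set) + 1) = (1::'a::{field,finite} qext)"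
    "v^(card (UNIV::'a set) + 1) = 1" "phiK u = phiK v"
  shows "v = u \<or> v = inverse u"
proof -
  have "iota (phiK u) = iota (phiK v)" using assms(3) by simp
  hence "u + inverse u = v + inverse v" by (simp only: phiK_iota[OF assms(1)] phiK_iota[OF assms(2)])
  thus ?thesis using inv_sum_eq[OF C_nz[OF assms(1)] C_nz[OF assms(2)]] by blast
qed


lemma iota_4 [simp]: "iota (4::'a::comm_ring_1) = 4"
proof -
  have "iota (2 * 2::'a) = (2 * 2::'a qext)" by (simp only: iota_hom iota_2)
  thus ?thesis by simp
qed

lemma frob_C_inv:
  assumes "u^(card (UNIV::'a set) + 1) = (1::'a::{field,finite} qext)"
  shows "frob (inverse u) = u"
  using C_frob[OF assms] by (simp add: frob_inverse)

lemma qchar_prod_split: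
  assumes odd: "odd (card (UNIV::'a::{field,finite} set))"
    and "qchar ((x::'a) * x - 4) = -1"
  shows "qchar (x - 2) * qchar (x + 2) = -1"
proof -
  have "x * x - 4 = (x - 2) * (x + 2)" by (simp add: algebra_simps)
  hence "qchar (x * x - 4) = qchar (x - 2) * qchar (x + 2)" using qchar_mult[OF odd] by simp
  thus ?thesis using assms(2) by simp
qed

lemma K_class:
  assumes odd: "odd (card (UNIV::'a::{field,finite} set))"
    and C: "u^(card (UNIV::'a set) + 1) = (1::'a qext)" and u1: "u \<noteq> 1" "u \<noteq> -1"
  defines "x \<equiv> phiK u"
  shows "qchar (x * x - 4) = -1"
    and "u^((card (UNIV::'a set) + 1) div 2) = 1 \<Longrightarrow> qchar (x + 2) = 1 \<and> qchar (x - 2) = -1"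
    and "u^((card (UNIV::'a set) + 1) div 2) \<noteq> 1 \<Longrightarrow> qchar (x + 2) = -1 \<and> qchar (x - 2) = 1"
proof -
  let ?q = "card (UNIV::'a set)"
  have u0: "u \<noteq> 0" using C by auto
  have ix: "iota x = u + inverse u" unfolding x_def by (rule phiK_iota[OF C])
  define z where "z = u - inverse u"
  have z0: "z \<noteq> 0"
  proof
    assume "z = 0"
    hence "u = inverse u" unfolding z_def by simp
    hence "u * u = 1" using u0 by (metis right_inverse)
    thus False using sq_eq1 u1 by blast
  qed
  have fz: "frob z = - z" unfolding z_def using C_frob[OF C] frob_C_inv[OF C]
    by (simp add: frob_diff)
  have "z^2 = (u + inverse u)^2 - 4" unfolding z_def using u0
    by (simp add: power2_eq_square field_simps)
  also have "\<dots> = iota (x * x - 4)" by (simp add: ix power2_eq_square)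
  finally have z2: "z^2 = iota (x * x - 4)" .
  show q4: "qchar (x * x - 4) = -1" by (rule NS_lemma[OF odd z0 fz z2])
  have prod: "qchar (x - 2) * qchar (x + 2) = -1" by (rule qchar_prod_split[OF odd q4])
  have up1: "u + 1 \<noteq> 0"
  proof
    assume "u + 1 = 0"
    hence "u = -1" by (simp add: eq_neg_iff_add_eq_0)
    thus False using u1 by simp
  qed
  have ix2: "iota (x + 2) = (u + 1)^2 / u" using ix u0 by (simp add: field_simps power2_eq_square)
  have x2: "x + 2 \<noteq> 0"
  proof
    assume "x + 2 = 0"
    hence "iota (x + 2) = 0" by simp
    thus False using ix2 up1 u0 by simp
  qed
  have qr: "qchar (x + 2) \<in> {-1, 1}" using x2 by (simp add: qchar_def)
  have ev: "even (?q + 1)" using odd by simp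
  have cardC: "card {y::'a qext. y^(?q + 1) = 1} = ?q + 1" by (rule C_card[OF odd])
  have QC: "(\<lambda>y. y^2) ` {y::'a qext. y^(?q + 1) = 1} = {y. y^((?q + 1) div 2) = 1}"
    by (rule sq_image(1)[OF cardC ev]) simp
  show "u^((?q + 1) div 2) = 1 \<Longrightarrow> qchar (x + 2) = 1 \<and> qchar (x - 2) = -1"
  proof -
    assume "u^((?q + 1) div 2) = 1"
    hence "u \<in> (\<lambda>y. y^2) ` {y::'a qext. y^(?q + 1) = 1}" using QC by auto
    then obtain w where w: "w^(?q + 1) = 1" "u = w^2" by auto
    have w0: "w \<noteq> 0" using w by auto
    have "iota (x + 2) = (w + inverse w)^2" using ix w w0
      by (simp add: power2_eq_square field_simps)
    also have "\<dots> = iota ((phiK w)^2)" by (simp add: phiK_iota[OF w(1)])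
    finally have "x + 2 = (phiK w)^2" by (simp only: iota_inj)
    hence "qchar (x + 2) = 1" using x2 by (auto simp: qchar_def)
    thus ?thesis using prod by simp
  qed
  show "u^((?q + 1) div 2) \<noteq> 1 \<Longrightarrow> qchar (x + 2) = -1 \<and> qchar (x - 2) = 1"
  proof -
    assume nq: "u^((?q + 1) div 2) \<noteq> 1"
    have "qchar (x + 2) \<noteq> 1"
    proof
      assume "qchar (x + 2) = 1"
      then obtain r where r: "r^2 = x + 2" by (auto simp: qchar_def split: if_splits)
      have r0: "iota r \<noteq> 0" using r x2 by (auto simp: iota_def qext_eq_iff)
      define w where "w = (u + 1) / iota r"
      have ir2: "(iota r)^2 = (u + 1)^2 / u" using r ix2 by (simp flip: iota_pow)
      have "w^2 = (u + 1)^2 / (iota r)^2" unfolding w_def by (simp add: power_divide)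
      also have "\<dots> = u" using ir2 up1 u0 r0 by (simp add: field_simps)
      finally have w2: "w^2 = u" .
      have fw: "frob w = (inverse u + 1) / iota r"
        unfolding w_def by (simp add: frob_divide frob_add frob_one frob_iota C_frob[OF C])
      have "w^(?q + 1) = frob w * w" by (simp add: frob_def)
      also have "\<dots> = ((inverse u + 1) * (u + 1)) / (iota r)^2"
        by (subst fw) (simp add: w_def power2_eq_square)
      also have "\<dots> = ((u + 1)^2 / u) / ((u + 1)^2 / u)"
      proof -
        have "(inverse u + 1) * (u + 1) = (u + 1)^2 / u" using u0
          by (simp add: field_simps power2_eq_square)
        thus ?thesis by (simp only: ir2)
      qed
      also have "\<dots> = 1" using up1 u0 by simp
      finally have "w^(?q + 1) = 1" .
      hence "u \<in> (\<lambda>y. y^2) ` {y::'a qext. y^(?q + 1) = 1}" using w2 by auto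
      thus False using QC nq by auto
    qed
    hence "qchar (x + 2) = -1" using qr by auto
    thus ?thesis using prod by simp
  qed
qed


lemma K_cover:
  assumes odd: "odd (card (UNIV::'a::{field,finite} set))"
    and x: "qchar ((x::'a) * x - 4) = -1"
  shows "\<exists>u::'a qext. u^(card (UNIV::'a set) + 1) = 1 \<and> u \<noteq> 1 \<and> u \<noteq> -1 \<and> phiK u = x"
proof -
  let ?q = "card (UNIV::'a set)"
  define \<delta> where "\<delta> = x * x - 4"
  have d0: "\<delta> \<noteq> 0" using x unfolding \<delta>_def by (auto simp: qchar_def)
  have two: "(2::'a qext) \<noteq> 0" by (rule two_K[OF odd])
  have q3: "?q \<ge> 3" by (rule card_ge3[OF odd])
  have cK: "card (UNIV::'a qext set) = ?q^2" by (rule card_qext)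
  let ?N = "?q^2 - 1"
  have evN: "even ?N" using odd by simp
  have "?q * ?q \<ge> 3 * 3" using q3 by (rule mult_le_mono) (use q3 in simp)
  hence Npos: "?N > 0" by (simp add: power2_eq_square)
  have hk: "card {y::'a qext. y^?N = 1} = ?N" by (rule HK_card)
  have QK: "(\<lambda>y. y^2) ` {y::'a qext. y^?N = 1} = {y. y^(?N div 2) = 1}"
    by (rule sq_image(1)[OF hk evN Npos])
  have Ndiv: "?N div 2 = (?q - 1) * ((?q + 1) div 2)"
  proof -
    obtain m where m: "?q = 2 * m + 1" using odd oddE by blast
    show ?thesis by (simp add: m power2_eq_square algebra_simps)
  qed
  have "iota \<delta> ^ (?N div 2) = iota ((\<delta>^(?q - 1))^((?q + 1) div 2))"
    by (simp only: Ndiv power_mult iota_pow)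
  also have "\<dots> = 1" using fermat_ff[OF d0] by simp
  finally have "iota \<delta> \<in> (\<lambda>y. y^2) ` {y::'a qext. y^?N = 1}" using QK by auto
  then obtain \<tau> where tau: "\<tau>^?N = 1" "iota \<delta> = \<tau>^2" by auto
  have t0: "\<tau> \<noteq> 0" using tau Npos by (auto simp: zero_power)
  have "(frob \<tau>)^2 = \<tau>^2"
  proof -
    have "(frob \<tau>)^2 = frob (\<tau>^2)" by (simp add: power2_eq_square frob_mult)
    also have "\<dots> = \<tau>^2" by (simp add: tau(2)[symmetric] frob_iota)
    finally show ?thesis .
  qed
  hence "frob \<tau> = \<tau> \<or> frob \<tau> = - \<tau>" by (simp add: power2_eq_iff)
  moreover have "frob \<tau> \<noteq> \<tau>"
  proof
    assume "frob \<tau> = \<tau>"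
    then obtain r where r: "\<tau> = iota r" using fixed_iota by blast
    have "iota \<delta> = iota (r^2)" using tau(2) r by simp
    hence "\<delta> = r^2" by (simp only: iota_inj)
    hence "qchar \<delta> = 1" using d0 by (auto simp: qchar_def)
    thus False using x unfolding \<delta>_def by simp
  qed
  ultimately have ft: "frob \<tau> = - \<tau>" by blast
  define u where "u = (iota x + \<tau>) / 2"
  define v where "v = (iota x - \<tau>) / 2"
  have "u * v = (iota x * iota x - \<tau>^2) / 4"
    unfolding u_def v_def by (simp add: field_simps power2_eq_square)
  also have "\<dots> = 1"
  proof -
    have "iota x * iota x - \<tau>^2 = iota 4" by (simp add: tau(2)[symmetric] \<delta>_def)
    moreover have "(4::'a qext) \<noteq> 0"
    proof -
      have "(4::'a qext) = 2 * 2" by simp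
      thus ?thesis using two by (simp only: mult_eq_0_iff) simp
    qed
    ultimately show ?thesis by simp
  qed
  finally have uv: "u * v = 1" .
  hence iu: "inverse u = v" by (rule inverse_unique)
  have fu: "frob u = v" unfolding u_def v_def
    by (simp add: frob_divide frob_add frob_iota frob_2 ft)
  have u0: "u \<noteq> 0" using uv by auto
  have uC: "u^(?q + 1) = 1" using fu uv by (simp add: frob_def mult.commute)
  have "u + inverse u = u + v" by (simp only: iu)
  also have "\<dots> = (2 * iota x) / 2" unfolding u_def v_def by (simp add: add_divide_distrib[symmetric])
  also have "\<dots> = iota x" using two by simp
  finally have "u + inverse u = iota x" .
  hence px: "phiK u = x" unfolding phiK_def by (simp add: iota_def)
  have x4: "x * x - 4 \<noteq> 0" using d0 unfolding \<delta>_def .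
  have "u \<noteq> 1"
  proof
    assume "u = 1"
    hence "iota x = 2" using \<open>u + inverse u = iota x\<close> by simp
    hence "iota x = iota 2" by simp
    hence "x = 2" by (simp only: iota_inj)
    thus False using x4 by simp
  qed
  moreover have "u \<noteq> -1"
  proof
    assume "u = -1"
    hence "iota x = -2" using \<open>u + inverse u = iota x\<close> by simp
    hence "iota x = iota (-2)" by simp
    hence "x = -2" by (simp only: iota_inj)
    thus False using x4 by simp
  qed
  ultimately show ?thesis using uC px by blast
qed


lemma qchar_one: "qchar (1::'a::field) = 1"
  by (auto simp: qchar_def intro: exI[of _ 1])

lemma qchar_pow:
  assumes odd: "odd (card (UNIV::'a::{field,finite} set))"
  shows "qchar ((u::'a) ^ k) = qchar u ^ k"
proof (induction k)
  case 0 thus ?case by (simp add: qchar_one)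
next
  case (Suc k) thus ?case by (simp add: qchar_mult[OF odd])
qed

lemma qchar_pm: "(u::'a::field) \<noteq> 0 \<Longrightarrow> qchar u = 1 \<or> qchar u = -1"
  by (simp add: qchar_def)

lemma qchar_eq1_iff:
  assumes odd: "odd (card (UNIV::'a::{field,finite} set))" and u: "(u::'a) \<noteq> 0"
  shows "qchar u = 1 \<longleftrightarrow> u ^ ((card (UNIV::'a set) - 1) div 2) = 1"
proof -
  have e: "(of_int (qchar u)::'a) = u ^ ((card (UNIV::'a set) - 1) div 2)" by (rule euler_qchar[OF odd])
  have two: "(2::'a) \<noteq> 0" using two_ne_zero_ff odd by blast
  have m1: "(-1::'a) \<noteq> 1"
  proof
    assume h: "(-1::'a) = 1"
    have "(2::'a) = 1 + 1" by simp
    also have "\<dots> = 1 + -1" using h by simp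
    finally show False using two by simp
  qed
  show ?thesis using qchar_pm[OF u] e m1 by auto
qed

lemma F_val:
  assumes odd: "odd (card (UNIV::'a::{field,finite} set))" and w: "(w::'a) \<noteq> 0"
  shows "(w = 1 \<and> w + inverse w = 2) \<or> (w = -1 \<and> w + inverse w = -2) \<or>
    (w \<noteq> 1 \<and> w \<noteq> -1 \<and> qchar (w + inverse w - 2) = qchar w \<and> qchar (w + inverse w + 2) = qchar w)"
  using F_class[OF odd w] by (cases "w = 1"; cases "w = -1") auto

lemma F_dickson: "(u::'a::field) \<noteq> 0 \<Longrightarrow> dickson k (u + inverse u) = u^k + inverse (u^k)"
  using dickson_uv[of u "inverse u" k] by (simp add: power_inverse)

definition sgK :: "'a::{field,finite} qext \<Rightarrow> int" where
  "sgK u = (if u ^ ((card (UNIV::'a set) + 1) div 2) = 1 then 1 else -1)"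

lemma C_pow:
  assumes "u^(card (UNIV::'a set) + 1) = (1::'a::{field,finite} qext)"
  shows "(u^k)^(card (UNIV::'a set) + 1) = 1"
proof -
  have "(u^k)^(card (UNIV::'a set) + 1) = (u^(card (UNIV::'a set) + 1))^k"
    by (simp only: power_mult[symmetric] mult.commute)
  thus ?thesis using assms by simp
qed

lemma m1_K:
  assumes odd: "odd (card (UNIV::'a::{field,finite} set))"
  shows "(-1::'a qext) \<noteq> 1"
proof
  assume h: "(-1::'a qext) = 1"
  have "(2::'a qext) = 1 + 1" by simp
  also have "\<dots> = 1 + -1" using h by simp
  finally show False using two_K[OF odd] by simp
qed

lemma neg1_pow_eq1: "(-1::'b::ring_1) \<noteq> 1 \<Longrightarrow> ((-1::'b) ^ j = 1 \<longleftrightarrow> even j)"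
  by (cases "even j") auto

lemma sgK_pow:
  assumes odd: "odd (card (UNIV::'a::{field,finite} set))"
    and C: "u^(card (UNIV::'a set) + 1) = (1::'a qext)"
  shows "sgK (u^k) = sgK u ^ k"
proof -
  let ?h = "(card (UNIV::'a set) + 1) div 2"
  have c: "u^?h = 1 \<or> u^?h = -1" using pow_nhalf_cases[OF C] odd by simp
  have e: "(u^k)^?h = (u^?h)^k" by (simp only: power_mult[symmetric] mult.commute)
  show ?thesis
  proof (cases "u^?h = 1")
    case True thus ?thesis using e by (simp add: sgK_def)
  next
    case False
    hence "u^?h = -1" using c by simp
    hence "(u^k)^?h = (-1)^k" using e by simp
    thus ?thesis using False neg1_pow_eq1[OF m1_K[OF odd], of k] by (simp add: sgK_def)
  qed
qed

lemma sgK_m1: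
  assumes odd: "odd (card (UNIV::'a::{field,finite} set))"
  shows "sgK (-1::'a qext) = - ((-1) ^ ((card (UNIV::'a set) - 1) div 2))"
proof -
  let ?m = "(card (UNIV::'a set) - 1) div 2"
  have h: "(card (UNIV::'a set) + 1) div 2 = Suc ?m" using odd by (auto elim!: oddE)
  show ?thesis unfolding sgK_def h using neg1_pow_eq1[OF m1_K[OF odd], of "Suc ?m"]
    by (cases "even ?m") auto
qed

lemma phiK_1: "phiK (1::'a::{field,finite} qext) = 2"
proof -
  have "iota (phiK (1::'a qext)) = iota 2" by (simp add: phiK_iota)
  thus ?thesis by (simp only: iota_inj)
qed

lemma C_m1:
  assumes odd: "odd (card (UNIV::'a::{field,finite} set))"
  shows "(-1::'a qext)^(card (UNIV::'a set) + 1) = 1"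
  using odd by simp

lemma phiK_m1:
  assumes odd: "odd (card (UNIV::'a::{field,finite} set))"
  shows "phiK (-1::'a qext) = -2"
proof -
  have "iota (phiK (-1::'a qext)) = iota (-2)" by (simp add: phiK_iota[OF C_m1[OF odd]])
  thus ?thesis by (simp only: iota_inj)
qed

lemma K_val:
  assumes odd: "odd (card (UNIV::'a::{field,finite} set))"
    and C: "u^(card (UNIV::'a set) + 1) = (1::'a qext)"
  shows "(u = 1 \<and> phiK u = 2) \<or> (u = -1 \<and> phiK u = -2) \<or>
    (u \<noteq> 1 \<and> u \<noteq> -1 \<and> qchar (phiK u - 2) = - sgK u \<and> qchar (phiK u + 2) = sgK u)"
proof (cases "u = 1")
  case True thus ?thesis by (simp add: phiK_1)
next
  case n1: False
  show ?thesis
  proof (cases "u = -1")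
    case True thus ?thesis using phiK_m1[OF odd] by simp
  next
    case False
    let ?h = "(card (UNIV::'a set) + 1) div 2"
    have "qchar (phiK u - 2) = - sgK u \<and> qchar (phiK u + 2) = sgK u"
    proof (cases "u^?h = 1")
      case True
      hence "sgK u = 1" by (simp add: sgK_def)
      thus ?thesis using K_class(2)[OF odd C n1 False True] by simp
    next
      case nq: False
      hence "sgK u = -1" by (simp add: sgK_def)
      thus ?thesis using K_class(3)[OF odd C n1 False nq] by simp
    qed
    thus ?thesis using False n1 by blast
  qed
qed

lemma cover:
  assumes odd: "odd (card (UNIV::'a::{field,finite} set))"
  shows "(x::'a) = 2 \<or> x = -2 \<or> (\<exists>u. u \<noteq> 0 \<and> u \<noteq> 1 \<and> u \<noteq> -1 \<and> x = u + inverse u) \<or>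
    (\<exists>u::'a qext. u^(card (UNIV::'a set) + 1) = 1 \<and> u \<noteq> 1 \<and> u \<noteq> -1 \<and> phiK u = x)"
proof -
  have "qchar (x * x - 4) = 0 \<or> qchar (x * x - 4) = 1 \<or> qchar (x * x - 4) = -1"
    using qchar_range[of "x * x - 4"] by auto
  thus ?thesis
  proof (elim disjE)
    assume "qchar (x * x - 4) = 0" thus ?thesis using F_degen[OF odd] by blast
  next
    assume "qchar (x * x - 4) = 1" thus ?thesis using F_cover[OF odd] by blast
  next
    assume "qchar (x * x - 4) = -1"
    hence "\<exists>u::'a qext. u^(card (UNIV::'a set) + 1) = 1 \<and> u \<noteq> 1 \<and> u \<noteq> -1 \<and> phiK u = x"
      by (rule K_cover[OF odd])
    thus ?thesis by blast
  qed
qed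


lemma pm_pow: "(s::int) \<in> {1, -1} \<Longrightarrow> s ^ k = (if s = 1 \<or> even k then 1 else -1)"
  by auto

lemma D_F:
  assumes odd: "odd (card (UNIV::'a::{field,finite} set))"
    and u: "(u::'a) \<noteq> 0" "u \<noteq> 1" "u \<noteq> -1"
  shows "qchar (u + inverse u - 2) = qchar u \<and> qchar (u + inverse u + 2) = qchar u \<and>
    ((dickson k (u + inverse u) = 2 \<and> qchar u ^ k = 1) \<or>
     (dickson k (u + inverse u) = -2 \<and> qchar u ^ k = qchar (-1::'a)) \<or>
     (qchar (dickson k (u + inverse u) - 2) = qchar u ^ k \<and> qchar (dickson k (u + inverse u) + 2) = qchar u ^ k))"
proof -
  have c: "qchar (u + inverse u - 2) = qchar u \<and> qchar (u + inverse u + 2) = qchar u"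
    by (rule F_class[OF odd u])
  define w where "w = u ^ k"
  have w0: "w \<noteq> 0" unfolding w_def using u by simp
  have D: "dickson k (u + inverse u) = w + inverse w" unfolding w_def by (rule F_dickson[OF u(1)])
  have qw: "qchar w = qchar u ^ k" unfolding w_def by (rule qchar_pow[OF odd])
  have "(w = 1 \<and> w + inverse w = 2) \<or> (w = -1 \<and> w + inverse w = -2) \<or>
    (w \<noteq> 1 \<and> w \<noteq> -1 \<and> qchar (w + inverse w - 2) = qchar w \<and> qchar (w + inverse w + 2) = qchar w)"
    by (rule F_val[OF odd w0])
  thus ?thesis
  proof (elim disjE conjE)
    assume "w = 1" "w + inverse w = 2"
    thus ?thesis using c D qw by (simp add: qchar_one)
  next
    assume "w = -1" "w + inverse w = -2"
    thus ?thesis using c D qw by simp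
  next
    assume "qchar (w + inverse w - 2) = qchar w" "qchar (w + inverse w + 2) = qchar w"
    thus ?thesis using c D qw by simp
  qed
qed

lemma sgK_1: "sgK (1::'a::{field,finite} qext) = 1"
  by (simp add: sgK_def)

lemma D_K:
  assumes odd: "odd (card (UNIV::'a::{field,finite} set))"
    and C: "u^(card (UNIV::'a set) + 1) = (1::'a qext)" and u: "u \<noteq> 1" "u \<noteq> -1"
  shows "qchar (phiK u - 2) = - sgK u \<and> qchar (phiK u + 2) = sgK u \<and>
    ((dickson k (phiK u) = 2 \<and> sgK u ^ k = 1) \<or>
     (dickson k (phiK u) = -2 \<and> sgK u ^ k = - qchar (-1::'a)) \<or>
     (qchar (dickson k (phiK u) - 2) = - (sgK u ^ k) \<and> qchar (dickson k (phiK u) + 2) = sgK u ^ k))"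
proof -
  have c: "qchar (phiK u - 2) = - sgK u \<and> qchar (phiK u + 2) = sgK u"
    using K_val[OF odd C] u by auto
  define w where "w = u ^ k"
  have wC: "w^(card (UNIV::'a set) + 1) = 1" unfolding w_def by (rule C_pow[OF C])
  have D: "dickson k (phiK u) = phiK w" unfolding w_def by (rule phiK_dickson[OF C])
  have sw: "sgK w = sgK u ^ k" unfolding w_def by (rule sgK_pow[OF odd C])
  have m1: "sgK (-1::'a qext) = - qchar (-1::'a)"
    using sgK_m1[OF odd] qchar_minus1[OF odd] by simp
  have "(w = 1 \<and> phiK w = 2) \<or> (w = -1 \<and> phiK w = -2) \<or>
    (w \<noteq> 1 \<and> w \<noteq> -1 \<and> qchar (phiK w - 2) = - sgK w \<and> qchar (phiK w + 2) = sgK w)"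
    by (rule K_val[OF odd wC])
  thus ?thesis
  proof (elim disjE conjE)
    assume "w = 1" "phiK w = 2"
    thus ?thesis using c D sw by (simp add: sgK_1)
  next
    assume "w = -1" "phiK w = -2"
    thus ?thesis using c D sw m1 by simp
  next
    assume "qchar (phiK w - 2) = - sgK w" "qchar (phiK w + 2) = sgK w"
    thus ?thesis using c D sw by simp
  qed
qed

lemma sgK_pm: "sgK u \<in> {1, -1}" by (simp add: sgK_def)

lemma D_cases:
  assumes odd: "odd (card (UNIV::'a::{field,finite} set))"
    and x: "qchar ((x::'a) - 2) \<noteq> 0" "qchar (x + 2) \<noteq> 0"
  shows "(\<exists>\<sigma>\<in>{1,-1}. qchar (x - 2) = \<sigma> \<and> qchar (x + 2) = \<sigma> \<and>
       ((dickson k x = 2 \<and> \<sigma> ^ k = 1) \<or> (dickson k x = -2 \<and> \<sigma> ^ k = qchar (-1::'a)) \<or>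
        (qchar (dickson k x - 2) = \<sigma> ^ k \<and> qchar (dickson k x + 2) = \<sigma> ^ k)))
   \<or> (\<exists>s\<in>{1,-1}. qchar (x - 2) = - s \<and> qchar (x + 2) = s \<and>
       ((dickson k x = 2 \<and> s ^ k = 1) \<or> (dickson k x = -2 \<and> s ^ k = - qchar (-1::'a)) \<or>
        (qchar (dickson k x - 2) = - (s ^ k) \<and> qchar (dickson k x + 2) = s ^ k)))"
proof -
  have "x \<noteq> 2" "x \<noteq> -2" using x by (auto simp: qchar_def)
  hence "(\<exists>u. u \<noteq> 0 \<and> u \<noteq> 1 \<and> u \<noteq> -1 \<and> x = u + inverse u) \<or>
    (\<exists>u::'a qext. u^(card (UNIV::'a set) + 1) = 1 \<and> u \<noteq> 1 \<and> u \<noteq> -1 \<and> phiK u = x)"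
    using cover[OF odd, of x] by blast
  thus ?thesis
  proof (elim disjE exE conjE)
    fix u :: 'a assume u: "u \<noteq> 0" "u \<noteq> 1" "u \<noteq> -1" and xe: "x = u + inverse u"
    have "qchar u \<in> {1, -1}" using qchar_pm[OF u(1)] by auto
    thus ?thesis using D_F[OF odd u, of k] xe by blast
  next
    fix u :: "'a qext" assume C: "u^(card (UNIV::'a set) + 1) = 1" and u: "u \<noteq> 1" "u \<noteq> -1"
      and xe: "phiK u = x"
    show ?thesis using D_K[OF odd C u, of k] xe sgK_pm[of u] by blast
  qed
qed


lemma incl_pp:
  assumes odd: "odd (card (UNIV::'a::{field,finite} set))"
  shows "dickson k ` Aset (2::'a) 1 1 \<subseteq> Aset 2 1 1 \<union> {2, - 2 * of_int (qchar (-1::'a))}"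
proof
  fix y assume "y \<in> dickson k ` Aset (2::'a) 1 1"
  then obtain x where x: "x \<in> Aset (2::'a) 1 1" and y: "y = dickson k x" by auto
  have q: "qchar (x - 2) = 1" "qchar (x + 2) = 1" using x by (auto simp: Aset_def)
  show "y \<in> Aset 2 1 1 \<union> {2, - 2 * of_int (qchar (-1::'a))}"
    using D_cases[OF odd, of x k] q y by (auto simp: Aset_def)
qed

lemma incl_mp:
  assumes odd: "odd (card (UNIV::'a::{field,finite} set))"
  shows "dickson k ` Aset (2::'a) (-1) 1 \<subseteq> Aset 2 (-1) 1 \<union> {2, 2 * of_int (qchar (-1::'a))}"
proof
  fix y assume "y \<in> dickson k ` Aset (2::'a) (-1) 1"
  then obtain x where x: "x \<in> Aset (2::'a) (-1) 1" and y: "y = dickson k x" by auto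
  have q: "qchar (x - 2) = -1" "qchar (x + 2) = 1" using x by (auto simp: Aset_def)
  show "y \<in> Aset 2 (-1) 1 \<union> {2, 2 * of_int (qchar (-1::'a))}"
    using D_cases[OF odd, of x k] q y by (auto simp: Aset_def)
qed


lemma qchar_m1_pm: "qchar (-1::'a::field) \<in> {1, -1}"
  by (simp add: qchar_def)

lemma incl_odd1:
  assumes odd: "odd (card (UNIV::'a::{field,finite} set))" and k: "odd k"
  shows "dickson k ` Aset (2::'a) (qchar (-1::'a)) (-1) \<subseteq> Aset 2 (qchar (-1::'a)) (-1) \<union> {-2}"
proof
  fix y assume "y \<in> dickson k ` Aset (2::'a) (qchar (-1::'a)) (-1)"
  then obtain x where x: "x \<in> Aset (2::'a) (qchar (-1::'a)) (-1)" and y: "y = dickson k x" by auto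
  have q: "qchar (x - 2) = qchar (-1::'a)" "qchar (x + 2) = -1" using x by (auto simp: Aset_def)
  have e: "qchar (-1::'a) \<in> {1, -1}" by (rule qchar_m1_pm)
  show "y \<in> Aset 2 (qchar (-1::'a)) (-1) \<union> {-2}"
    using D_cases[OF odd, of x k] q y e k by (auto simp: Aset_def pm_pow)
qed

lemma incl_odd2:
  assumes odd: "odd (card (UNIV::'a::{field,finite} set))" and k: "odd k"
  shows "dickson k ` Aset (2::'a) (- qchar (-1::'a)) (-1) \<subseteq> Aset 2 (- qchar (-1::'a)) (-1)"
proof
  fix y assume "y \<in> dickson k ` Aset (2::'a) (- qchar (-1::'a)) (-1)"
  then obtain x where x: "x \<in> Aset (2::'a) (- qchar (-1::'a)) (-1)" and y: "y = dickson k x" by auto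
  have q: "qchar (x - 2) = - qchar (-1::'a)" "qchar (x + 2) = -1" using x by (auto simp: Aset_def)
  have e: "qchar (-1::'a) \<in> {1, -1}" by (rule qchar_m1_pm)
  show "y \<in> Aset 2 (- qchar (-1::'a)) (-1)"
    using D_cases[OF odd, of x k] q y e k by (auto simp: Aset_def pm_pow)
qed

lemma incl_even1:
  assumes odd: "odd (card (UNIV::'a::{field,finite} set))" and k: "even k"
  shows "dickson k ` Aset (2::'a) (-1) (-1) \<subseteq> Aset 2 1 1 \<union> {2, - 2 * of_int (qchar (-1::'a))}"
proof
  fix y assume "y \<in> dickson k ` Aset (2::'a) (-1) (-1)"
  then obtain x where x: "x \<in> Aset (2::'a) (-1) (-1)" and y: "y = dickson k x" by auto
  have q: "qchar (x - 2) = -1" "qchar (x + 2) = -1" using x by (auto simp: Aset_def)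
  show "y \<in> Aset 2 1 1 \<union> {2, - 2 * of_int (qchar (-1::'a))}"
    using D_cases[OF odd, of x k] q y k by (auto simp: Aset_def pm_pow)
qed

lemma incl_even2:
  assumes odd: "odd (card (UNIV::'a::{field,finite} set))" and k: "even k"
  shows "dickson k ` Aset (2::'a) 1 (-1) \<subseteq> Aset 2 (-1) 1 \<union> {2, 2 * of_int (qchar (-1::'a))}"
proof
  fix y assume "y \<in> dickson k ` Aset (2::'a) 1 (-1)"
  then obtain x where x: "x \<in> Aset (2::'a) 1 (-1)" and y: "y = dickson k x" by auto
  have q: "qchar (x - 2) = 1" "qchar (x + 2) = -1" using x by (auto simp: Aset_def)
  show "y \<in> Aset 2 (-1) 1 \<union> {2, 2 * of_int (qchar (-1::'a))}"
    using D_cases[OF odd, of x k] q y k by (auto simp: Aset_def pm_pow)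
qed


lemma dickson_2: "dickson k (2::'a::comm_ring_1) = 2"
  using dickson_uv[of 1 1 k] by simp

lemma dickson_m2: "dickson k (-2::'a::comm_ring_1) = (-1)^k * 2"
  using dickson_uv[of "-1" "-1" k] by (simp add: mult_2_right)

lemma pm_pow_field: "(w::'b::field) = 1 \<or> w = -1 \<Longrightarrow> w ^ j = 1 \<or> w ^ j = -1"
  by (elim disjE) (auto simp: minus_one_power_iff)

lemma F_pow_pm:
  assumes odd: "odd (card (UNIV::'a::{field,finite} set))" and u: "(u::'a) \<noteq> 0"
    and d: "(card (UNIV::'a set) - 1) div 2 dvd k"
  shows "u ^ k = 1 \<or> u ^ k = -1"
proof -
  let ?m = "(card (UNIV::'a set) - 1) div 2"
  have f: "u ^ (card (UNIV::'a set) - 1) = 1" by (rule fermat_ff[OF u])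
  have ev: "even (card (UNIV::'a set) - 1)" using odd by simp
  have c: "u ^ ?m = 1 \<or> u ^ ?m = -1" by (rule pow_nhalf_cases[OF f ev])
  obtain j where j: "k = ?m * j" using d by (auto elim: dvdE)
  have "u ^ k = (u ^ ?m) ^ j" by (simp only: j power_mult)
  thus ?thesis using pm_pow_field[OF c, of j] by simp
qed

lemma K_pow_pm:
  assumes odd: "odd (card (UNIV::'a::{field,finite} set))"
    and C: "u^(card (UNIV::'a set) + 1) = (1::'a qext)"
    and d: "(card (UNIV::'a set) + 1) div 2 dvd k"
  shows "u ^ k = 1 \<or> u ^ k = -1"
proof -
  let ?h = "(card (UNIV::'a set) + 1) div 2"
  have c: "u ^ ?h = 1 \<or> u ^ ?h = -1" using pow_nhalf_cases[OF C] odd by auto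
  obtain j where j: "k = ?h * j" using d by (auto elim: dvdE)
  have "u ^ k = (u ^ ?h) ^ j" by (simp only: j power_mult)
  thus ?thesis using pm_pow_field[OF c, of j] by simp
qed

lemma part_iv:
  assumes odd: "odd (card (UNIV::'a::{field,finite} set))"
    and d: "(card (UNIV::'a set) - 1) div 2 dvd k"
  shows "dickson k ` (UNIV::'a set) \<subseteq> Aset 2 1 (-1) \<union> Aset 2 (-1) 1 \<union> {2, -2}"
    and "even k \<Longrightarrow> dickson k ` (UNIV::'a set) \<subseteq> Aset 2 (-1) 1 \<union> {2, -2}"
proof -
  have main: "dickson k x \<in> {2, -2} \<or> (\<exists>s\<in>{1,-1}. qchar (dickson k x - 2) = - (s ^ k) \<and>
      qchar (dickson k x + 2) = s ^ k)" for x :: 'a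
  proof -
    have "x = 2 \<or> x = -2 \<or> (\<exists>u. u \<noteq> 0 \<and> u \<noteq> 1 \<and> u \<noteq> -1 \<and> x = u + inverse u) \<or>
      (\<exists>u::'a qext. u^(card (UNIV::'a set) + 1) = 1 \<and> u \<noteq> 1 \<and> u \<noteq> -1 \<and> phiK u = x)"
      by (rule cover[OF odd])
    thus ?thesis
    proof (elim disjE exE conjE)
      assume "x = 2" thus ?thesis by (simp add: dickson_2)
    next
      assume "x = -2" thus ?thesis by (simp add: dickson_m2 minus_one_power_iff)
    next
      fix u :: 'a assume u: "u \<noteq> 0" "u \<noteq> 1" "u \<noteq> -1" and xe: "x = u + inverse u"
      have "u ^ k = 1 \<or> u ^ k = -1" by (rule F_pow_pm[OF odd u(1) d])
      thus ?thesis using F_dickson[OF u(1), of k] xe by auto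
    next
      fix u :: "'a qext" assume C: "u^(card (UNIV::'a set) + 1) = 1" and u: "u \<noteq> 1" "u \<noteq> -1"
        and xe: "phiK u = x"
      show ?thesis using D_K[OF odd C u, of k] xe sgK_pm[of u] by auto
    qed
  qed
  show "dickson k ` (UNIV::'a set) \<subseteq> Aset 2 1 (-1) \<union> Aset 2 (-1) 1 \<union> {2, -2}" (is "_ \<subseteq> ?B")
  proof
    fix y assume "y \<in> dickson k ` (UNIV::'a set)"
    then obtain x where y: "y = dickson k x" by auto
    show "y \<in> ?B" using main[of x] y by (auto simp: Aset_def pm_pow split: if_splits)
  qed
  assume ek: "even k"
  show "dickson k ` (UNIV::'a set) \<subseteq> Aset 2 (-1) 1 \<union> {2, -2}" (is "_ \<subseteq> ?B")
  proof
    fix y assume "y \<in> dickson k ` (UNIV::'a set)"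
    then obtain x where y: "y = dickson k x" by auto
    show "y \<in> ?B" using main[of x] y ek by (auto simp: Aset_def pm_pow split: if_splits)
  qed
qed

lemma part_v:
  assumes odd: "odd (card (UNIV::'a::{field,finite} set))"
    and d: "(card (UNIV::'a set) + 1) div 2 dvd k"
  shows "dickson k ` (UNIV::'a set) \<subseteq> Aset 2 1 1 \<union> Aset 2 (-1) (-1) \<union> {2, -2}"
    and "even k \<Longrightarrow> dickson k ` (UNIV::'a set) \<subseteq> Aset 2 1 1 \<union> {2, -2}"
proof -
  have main: "dickson k x \<in> {2, -2} \<or> (\<exists>s\<in>{1,-1}. qchar (dickson k x - 2) = s ^ k \<and>
      qchar (dickson k x + 2) = s ^ k)" for x :: 'a
  proof -
    have "x = 2 \<or> x = -2 \<or> (\<exists>u. u \<noteq> 0 \<and> u \<noteq> 1 \<and> u \<noteq> -1 \<and> x = u + inverse u) \<or>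
      (\<exists>u::'a qext. u^(card (UNIV::'a set) + 1) = 1 \<and> u \<noteq> 1 \<and> u \<noteq> -1 \<and> phiK u = x)"
      by (rule cover[OF odd])
    thus ?thesis
    proof (elim disjE exE conjE)
      assume "x = 2" thus ?thesis by (simp add: dickson_2)
    next
      assume "x = -2" thus ?thesis by (simp add: dickson_m2 minus_one_power_iff)
    next
      fix u :: 'a assume u: "u \<noteq> 0" "u \<noteq> 1" "u \<noteq> -1" and xe: "x = u + inverse u"
      have "qchar u \<in> {1, -1}" using qchar_pm[OF u(1)] by auto
      thus ?thesis using D_F[OF odd u, of k] xe by auto
    next
      fix u :: "'a qext" assume C: "u^(card (UNIV::'a set) + 1) = 1" and u: "u \<noteq> 1" "u \<noteq> -1"
        and xe: "phiK u = x"
      have "u ^ k = 1 \<or> u ^ k = -1" by (rule K_pow_pm[OF odd C d])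
      thus ?thesis using phiK_dickson[OF C, of k] xe phiK_1 phiK_m1[OF odd] by auto
    qed
  qed
  show "dickson k ` (UNIV::'a set) \<subseteq> Aset 2 1 1 \<union> Aset 2 (-1) (-1) \<union> {2, -2}" (is "_ \<subseteq> ?B")
  proof
    fix y assume "y \<in> dickson k ` (UNIV::'a set)"
    then obtain x where y: "y = dickson k x" by auto
    show "y \<in> ?B" using main[of x] y by (auto simp: Aset_def pm_pow split: if_splits)
  qed
  assume ek: "even k"
  show "dickson k ` (UNIV::'a set) \<subseteq> Aset 2 1 1 \<union> {2, -2}" (is "_ \<subseteq> ?B")
  proof
    fix y assume "y \<in> dickson k ` (UNIV::'a set)"
    then obtain x where y: "y = dickson k x" by auto
    show "y \<in> ?B" using main[of x] y ek by (auto simp: Aset_def pm_pow split: if_splits)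
  qed
qed


lemma F_hA:
  assumes odd: "odd (card (UNIV::'a::{field,finite} set))" and u: "(u::'a) \<noteq> 0"
  shows "(u + inverse u \<in> Aset 2 1 1 \<longleftrightarrow> u \<in> {y. y^((card (UNIV::'a set) - 1) div 2) = 1} - {1, -1})
    \<and> (u + inverse u \<in> Aset 2 (-1) (-1) \<longleftrightarrow>
        u \<in> {y. y^(card (UNIV::'a set) - 1) = 1} - {y. y^((card (UNIV::'a set) - 1) div 2) = 1} - {1, -1})"
proof -
  have uH: "u^(card (UNIV::'a set) - 1) = 1" by (rule fermat_ff[OF u])
  have e: "qchar u = 1 \<longleftrightarrow> u ^ ((card (UNIV::'a set) - 1) div 2) = 1" by (rule qchar_eq1_iff[OF odd u])
  have pm: "qchar u = 1 \<or> qchar u = -1" by (rule qchar_pm[OF u])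
  have "(u = 1 \<and> u + inverse u = 2) \<or> (u = -1 \<and> u + inverse u = -2) \<or>
    (u \<noteq> 1 \<and> u \<noteq> -1 \<and> qchar (u + inverse u - 2) = qchar u \<and> qchar (u + inverse u + 2) = qchar u)"
    by (rule F_val[OF odd u])
  thus ?thesis
  proof (elim disjE conjE)
    assume "u = 1" "u + inverse u = 2" thus ?thesis by (simp add: Aset_def qchar_def)
  next
    assume "u = -1" "u + inverse u = -2" thus ?thesis by (simp add: Aset_def qchar_def)
  next
    assume "u \<noteq> 1" "u \<noteq> -1" "qchar (u + inverse u - 2) = qchar u" "qchar (u + inverse u + 2) = qchar u"
    thus ?thesis using e pm uH by (auto simp: Aset_def)
  qed
qed

lemma K_hA:
  assumes odd: "odd (card (UNIV::'a::{field,finite} set))"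
    and C: "u^(card (UNIV::'a set) + 1) = (1::'a qext)"
  shows "(phiK u \<in> Aset 2 (-1) 1 \<longleftrightarrow> u \<in> {y. y^((card (UNIV::'a set) + 1) div 2) = 1} - {1, -1})
    \<and> (phiK u \<in> Aset 2 1 (-1) \<longleftrightarrow>
        u \<in> {y. y^(card (UNIV::'a set) + 1) = 1} - {y. y^((card (UNIV::'a set) + 1) div 2) = 1} - {1, -1})"
proof -
  have "(u = 1 \<and> phiK u = 2) \<or> (u = -1 \<and> phiK u = -2) \<or>
    (u \<noteq> 1 \<and> u \<noteq> -1 \<and> qchar (phiK u - 2) = - sgK u \<and> qchar (phiK u + 2) = sgK u)"
    by (rule K_val[OF odd C])
  thus ?thesis
  proof (elim disjE conjE)
    assume "u = 1" "phiK u = 2" thus ?thesis by (simp add: Aset_def qchar_def)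
  next
    assume "u = -1" "phiK u = -2" thus ?thesis by (simp add: Aset_def qchar_def)
  next
    assume "u \<noteq> 1" "u \<noteq> -1" "qchar (phiK u - 2) = - sgK u" "qchar (phiK u + 2) = sgK u"
    thus ?thesis using C by (auto simp: Aset_def sgK_def)
  qed
qed


lemma qchar_xx4:
  assumes odd: "odd (card (UNIV::'a::{field,finite} set))"
  shows "qchar ((x::'a) * x - 4) = qchar (x - 2) * qchar (x + 2)"
proof -
  have "x * x - 4 = (x - 2) * (x + 2)" by (simp add: algebra_simps)
  thus ?thesis using qchar_mult[OF odd] by simp
qed

lemma HF_nz: "u^(card (UNIV::'a::{field,finite} set) - 1) = (1::'a) \<Longrightarrow> u \<noteq> 0"
  using card_ge2[where 'a='a] by (auto simp: zero_power)

lemma vi_F: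
  assumes odd: "odd (card (UNIV::'a::{field,finite} set))" and k: "k \<ge> 1"
    and e: "e = 1 \<or> e = -1" and ne: "Aset (2::'a) e e \<noteq> {}"
  shows "bij_betw (dickson k) (Aset (2::'a) e e) (Aset 2 e e) \<longleftrightarrow>
     gcd k (if e = 1 then (card (UNIV::'a set) - 1) div 2 else card (UNIV::'a set) - 1) = 1"
proof (rule power_perm[where \<phi>="\<lambda>u. u + inverse u" and n="card (UNIV::'a set) - 1" and b="e = 1"])
  show "card {y::'a. y ^ (card (UNIV::'a set) - 1) = 1} = card (UNIV::'a set) - 1" by (rule HF_card)
  show "even (card (UNIV::'a set) - 1)" using odd by simp
  show "0 < card (UNIV::'a set) - 1" using card_ge3[OF odd] by simp
  show "(2::'a) \<noteq> 0" by (rule two_ne_zero_ff[OF odd])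
  show "1 \<le> k" by (rule k)
  show "Aset (2::'a) e e \<noteq> {}" by (rule ne)
  let ?T = "(if e = 1 then {y::'a. y ^ ((card (UNIV::'a set) - 1) div 2) = 1}
        else {y. y ^ (card (UNIV::'a set) - 1) = 1} - {y. y ^ ((card (UNIV::'a set) - 1) div 2) = 1}) - {1, - 1}"
  have hA: "u + inverse u \<in> Aset 2 e e \<longleftrightarrow> u \<in> ?T" if u: "u \<noteq> 0" for u :: 'a
    using F_hA[OF odd u] e by auto
  show "\<forall>u\<in>{y::'a. y ^ (card (UNIV::'a set) - 1) = 1}. (u + inverse u \<in> Aset 2 e e) = (u \<in> ?T)"
    using hA HF_nz by blast
  show "Aset 2 e e \<subseteq> (\<lambda>u. u + inverse u) ` ?T"
  proof
    fix x assume x: "x \<in> Aset (2::'a) e e"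
    hence "qchar (x * x - 4) = 1" using qchar_xx4[OF odd, of x] e by (auto simp: Aset_def)
    then obtain u where u: "u \<noteq> 0" "u \<noteq> 1" "u \<noteq> -1" "x = u + inverse u"
      using F_cover[OF odd] by blast
    hence "u \<in> ?T" using hA x by blast
    thus "x \<in> (\<lambda>u. u + inverse u) ` ?T" using u by blast
  qed
  show "\<forall>u\<in>?T. \<forall>v\<in>?T. u + inverse u = v + inverse v \<longrightarrow> v = u \<or> v = inverse u"
  proof (intro ballI impI)
    fix u v assume "u \<in> ?T" "v \<in> ?T" "u + inverse u = v + inverse v"
    moreover have m0: "(card (UNIV::'a set) - 1) div 2 \<noteq> 0" using card_ge3[OF odd] by linarith
    moreover have "u \<noteq> 0" "v \<noteq> 0" using \<open>u \<in> ?T\<close> \<open>v \<in> ?T\<close> HF_nz e m0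
      by (auto split: if_splits simp: zero_power)
    ultimately show "v = u \<or> v = inverse u" using inv_sum_eq by blast
  qed
  show "\<forall>u\<in>{y::'a. y ^ (card (UNIV::'a set) - 1) = 1}. inverse u + inverse (inverse u) = u + inverse u"
    by (simp add: add.commute)
  show "\<forall>u\<in>{y::'a. y ^ (card (UNIV::'a set) - 1) = 1}. dickson k (u + inverse u) = u ^ k + inverse (u ^ k)"
    using F_dickson HF_nz by blast
qed


lemma vi_K:
  assumes odd: "odd (card (UNIV::'a::{field,finite} set))" and k: "k \<ge> 1"
    and e: "e = 1 \<or> e = -1" and ne: "Aset (2::'a) (-e) e \<noteq> {}"
  shows "bij_betw (dickson k) (Aset (2::'a) (-e) e) (Aset 2 (-e) e) \<longleftrightarrow>
     gcd k (if e = 1 then (card (UNIV::'a set) + 1) div 2 else card (UNIV::'a set) + 1) = 1"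
proof (rule power_perm[where \<phi>="phiK" and n="card (UNIV::'a set) + 1" and b="e = 1"])
  show "card {y::'a qext. y ^ (card (UNIV::'a set) + 1) = 1} = card (UNIV::'a set) + 1"
    by (rule C_card[OF odd])
  show "even (card (UNIV::'a set) + 1)" using odd by simp
  show "0 < card (UNIV::'a set) + 1" by simp
  show "(2::'a qext) \<noteq> 0" by (rule two_K[OF odd])
  show "1 \<le> k" by (rule k)
  show "Aset (2::'a) (-e) e \<noteq> {}" by (rule ne)
  let ?T = "(if e = 1 then {y::'a qext. y ^ ((card (UNIV::'a set) + 1) div 2) = 1}
        else {y. y ^ (card (UNIV::'a set) + 1) = 1} - {y. y ^ ((card (UNIV::'a set) + 1) div 2) = 1}) - {1, - 1}"
  have hA: "phiK u \<in> Aset 2 (-e) e \<longleftrightarrow> u \<in> ?T"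
    if u: "u^(card (UNIV::'a set) + 1) = 1" for u :: "'a qext"
    using K_hA[OF odd u] e by auto
  show "\<forall>u\<in>{y::'a qext. y ^ (card (UNIV::'a set) + 1) = 1}. (phiK u \<in> Aset 2 (-e) e) = (u \<in> ?T)"
    using hA by blast
  have TC: "u^(card (UNIV::'a set) + 1) = 1" if "u \<in> ?T" for u
  proof -
    show ?thesis
    proof (cases "e = 1")
      case True
      hence "u^((card (UNIV::'a set) + 1) div 2) = 1" using that by simp
      hence "(u^((card (UNIV::'a set) + 1) div 2))^2 = 1" by simp
      hence "u^((card (UNIV::'a set) + 1) div 2 * 2) = 1" by (simp only: power_mult)
      moreover have "(card (UNIV::'a set) + 1) div 2 * 2 = card (UNIV::'a set) + 1" using odd by (auto elim!: oddE)
      ultimately show ?thesis by simp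
    next
      case False thus ?thesis using that by simp
    qed
  qed
  show "Aset 2 (-e) e \<subseteq> phiK ` ?T"
  proof
    fix x assume x: "x \<in> Aset (2::'a) (-e) e"
    hence "qchar (x * x - 4) = -1" using qchar_xx4[OF odd, of x] e by (auto simp: Aset_def)
    then obtain u :: "'a qext" where u: "u^(card (UNIV::'a set) + 1) = 1" "u \<noteq> 1" "u \<noteq> -1" "phiK u = x"
      using K_cover[OF odd] by blast
    hence "u \<in> ?T" using hA x by blast
    thus "x \<in> phiK ` ?T" using u by blast
  qed
  show "\<forall>u\<in>?T. \<forall>v\<in>?T. phiK u = phiK v \<longrightarrow> v = u \<or> v = inverse u"
    using phiK_eq TC by blast
  show "\<forall>u\<in>{y::'a qext. y ^ (card (UNIV::'a set) + 1) = 1}. phiK (inverse u) = phiK u"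
    by (simp add: phiK_inv)
  show "\<forall>u\<in>{y::'a qext. y ^ (card (UNIV::'a set) + 1) = 1}. dickson k (phiK u) = phiK (u ^ k)"
    using phiK_dickson by blast
qed


theorem theorem1p1:
  fixes k q :: nat and \<epsilon> :: int
  assumes q_def: "q = card (UNIV::'a::{field,finite} set)"
    and q_odd: "odd q"
    and eps_def: "\<epsilon> = (-1::int) ^ ((q - 1) div 2)"
    and k_pos: "k \<ge> 1"
  shows
   "dickson k (2::'a) = 2 \<and> dickson k (-2::'a) = (-1) ^ k * 2
    \<and> (dickson k ` Aset (2::'a) 1 1 \<subseteq> Aset 2 1 1 \<union> {2, - 2 * of_int \<epsilon>}
       \<and> dickson k ` Aset (2::'a) (-1) 1 \<subseteq> Aset 2 (-1) 1 \<union> {2, 2 * of_int \<epsilon>})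
    \<and> (odd k \<longrightarrow>
         dickson k ` Aset (2::'a) \<epsilon> (-1) \<subseteq> Aset 2 \<epsilon> (-1) \<union> {-2}
       \<and> dickson k ` Aset (2::'a) (-\<epsilon>) (-1) \<subseteq> Aset 2 (-\<epsilon>) (-1))
    \<and> (even k \<longrightarrow>
         dickson k ` Aset (2::'a) (-1) (-1) \<subseteq> Aset 2 1 1 \<union> {2, - 2 * of_int \<epsilon>}
       \<and> dickson k ` Aset (2::'a) 1 (-1) \<subseteq> Aset 2 (-1) 1 \<union> {2, 2 * of_int \<epsilon>})
    \<and> ((q - 1) div 2 dvd k \<longrightarrow>
         dickson k ` (UNIV::'a set) \<subseteq> Aset 2 1 (-1) \<union> Aset 2 (-1) 1 \<union> {2, -2}
       \<and> (even k \<longrightarrow> dickson k ` (UNIV::'a set) \<subseteq> Aset 2 (-1) 1 \<union> {2, -2}))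
    \<and> ((q + 1) div 2 dvd k \<longrightarrow>
         dickson k ` (UNIV::'a set) \<subseteq> Aset 2 1 1 \<union> Aset 2 (-1) (-1) \<union> {2, -2}
       \<and> (even k \<longrightarrow> dickson k ` (UNIV::'a set) \<subseteq> Aset 2 1 1 \<union> {2, -2}))
    \<and> (\<forall>e1\<in>{1, -1}. \<forall>e2\<in>{1, -1}. Aset (2::'a) e1 e2 \<noteq> {} \<longrightarrow>
         (bij_betw (dickson k) (Aset (2::'a) e1 e2) (Aset 2 e1 e2)
          \<longleftrightarrow> gcd k (dval q e1 e2) = 1))"
proof -
  have odd: "odd (card (UNIV::'a set))" using q_odd q_def by simp
  have epsq: "\<epsilon> = qchar (-1::'a)" using qchar_minus1[OF odd] eps_def q_def by simp
  have c1: "dickson k (2::'a) = 2" by (rule dickson_2)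
  have c2: "dickson k (-2::'a) = (-1) ^ k * 2" by (rule dickson_m2)
  have c3: "dickson k ` Aset (2::'a) 1 1 \<subseteq> Aset 2 1 1 \<union> {2, - 2 * of_int \<epsilon>}"
    using incl_pp[OF odd, of k] epsq by simp
  have c4: "dickson k ` Aset (2::'a) (-1) 1 \<subseteq> Aset 2 (-1) 1 \<union> {2, 2 * of_int \<epsilon>}"
    using incl_mp[OF odd, of k] epsq by simp
  have c5: "odd k \<longrightarrow>
         dickson k ` Aset (2::'a) \<epsilon> (-1) \<subseteq> Aset 2 \<epsilon> (-1) \<union> {-2}
       \<and> dickson k ` Aset (2::'a) (-\<epsilon>) (-1) \<subseteq> Aset 2 (-\<epsilon>) (-1)"
    using incl_odd1[OF odd, of k] incl_odd2[OF odd, of k] epsq by simp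
  have c6: "even k \<longrightarrow>
         dickson k ` Aset (2::'a) (-1) (-1) \<subseteq> Aset 2 1 1 \<union> {2, - 2 * of_int \<epsilon>}
       \<and> dickson k ` Aset (2::'a) 1 (-1) \<subseteq> Aset 2 (-1) 1 \<union> {2, 2 * of_int \<epsilon>}"
    using incl_even1[OF odd, of k] incl_even2[OF odd, of k] epsq by simp
  have c7: "(q - 1) div 2 dvd k \<longrightarrow>
         dickson k ` (UNIV::'a set) \<subseteq> Aset 2 1 (-1) \<union> Aset 2 (-1) 1 \<union> {2, -2}
       \<and> (even k \<longrightarrow> dickson k ` (UNIV::'a set) \<subseteq> Aset 2 (-1) 1 \<union> {2, -2})"
    using part_iv[OF odd, of k] q_def by simp
  have c8: "(q + 1) div 2 dvd k \<longrightarrow>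
         dickson k ` (UNIV::'a set) \<subseteq> Aset 2 1 1 \<union> Aset 2 (-1) (-1) \<union> {2, -2}
       \<and> (even k \<longrightarrow> dickson k ` (UNIV::'a set) \<subseteq> Aset 2 1 1 \<union> {2, -2})"
    using part_v[OF odd, of k] q_def by simp
  have c9: "\<forall>e1\<in>{1, -1}. \<forall>e2\<in>{1, -1}. Aset (2::'a) e1 e2 \<noteq> {} \<longrightarrow>
         (bij_betw (dickson k) (Aset (2::'a) e1 e2) (Aset 2 e1 e2)
          \<longleftrightarrow> gcd k (dval q e1 e2) = 1)"
  proof (intro ballI impI)
    fix e1 e2 :: int assume e1: "e1 \<in> {1, -1}" and e2: "e2 \<in> {1, -1}"
      and ne: "Aset (2::'a) e1 e2 \<noteq> {}"
    show "bij_betw (dickson k) (Aset (2::'a) e1 e2) (Aset 2 e1 e2) \<longleftrightarrow> gcd k (dval q e1 e2) = 1"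
    proof (cases "e1 = e2")
      case True
      hence ee: "e2 = 1 \<or> e2 = -1" using e2 by auto
      have "bij_betw (dickson k) (Aset (2::'a) e2 e2) (Aset 2 e2 e2) \<longleftrightarrow>
         gcd k (if e2 = 1 then (card (UNIV::'a set) - 1) div 2 else card (UNIV::'a set) - 1) = 1"
        using vi_F[OF odd k_pos ee] ne True by simp
      thus ?thesis using True ee q_def by (auto simp: dval_def)
    next
      case False
      hence ee: "e2 = 1 \<or> e2 = -1" and e1e: "e1 = - e2" using e1 e2 by auto
      have "bij_betw (dickson k) (Aset (2::'a) (-e2) e2) (Aset 2 (-e2) e2) \<longleftrightarrow>
         gcd k (if e2 = 1 then (card (UNIV::'a set) + 1) div 2 else card (UNIV::'a set) + 1) = 1"
        using vi_K[OF odd k_pos ee] ne e1e by simp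
      thus ?thesis using e1e ee q_def by (auto simp: dval_def)
    qed
  qed
  show ?thesis using c1 c2 c3 c4 c5 c6 c7 c8 c9 by blast
qed


end
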